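(* Let $n\ge1$ and $u\ge0$ be integers. Then $$\sum_{W:\ L^{\mathrm{p2hlr}}_n(W)\le u}\mathrm{wt}(W)=\Big(\prod_{i=1}^n x_i\Big)^u\sum_{\lambda:\ \lambda_1\le u,\ \ell(\lambda)\le n} sp_\lambda(x_1^{\pm},\dots,x_n^{\pm}),$$ where the left sum runs over all fillings of $D^{\mathrm{p2hlr}}_n$ by non-negative integers with $L^{\mathrm{p2hlr}}_n(W)\le u$.
   Context: $D^{\mathrm{p2hlr}}_n=\{(i,j)\in\mathbb{Z}^2: 1\le i\le j,\ i+j\le 2n+1\}$ (unit squares; $i$ = column, $j$ = row). A filling $W=(w_{i,j})$ assigns non-negative integers to squares. Column $i$ carries $x_i$; row $j$ carries $y_j=x_j$ if $j\le n$ and $y_j=x_{2n-j+1}$ if $j>n$. $\mathrm{wt}(W)=\prod_{i\ne j}(x_iy_j)^{w_{i,j}}\prod_{i}x_i^{w_{i,i}}$. $L^{\mathrm{p2hlr}}_n(W)$ is the maximum over up-right paths (unit steps right or up) in the domain from $(1,1)$ to a square with $i+j=2n+1$ of the sum of the $w_{i,j}$ along the path. For a partition $\lambda$ with $\ell(\lambda)\le n$, the symplectic character is $sp_\lambda(x_1^\pm,\dots,x_n^\pm)=\sum_T\prod_{i=1}^n x_i^{\#\{i\text{ in }T\}-\#\{\bar i\text{ in }T\}}$, the sum over King symplectic tableaux $T$ of shape $\lambda$: fillings of the Young diagram of $\lambda$ with the ordered alphabet $1<\bar1<2<\bar2<\dots<n<\bar n$, weakly increasing along rows, strictly increasing down columns,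 such that every entry in row $r$ is $\ge r$ (i.e. $\ge$ the letter $r$). $\lambda_1$ is the largest part and $\ell(\lambda)$ the number of nonzero parts. *)

theory Defs
  imports Main
begin

text \<open>The domain D^{p2hlr}_n: squares (i,j) with i = column, j = row.\<close>
definition Dp2hlr :: "nat \<Rightarrow> (nat \<times> nat) set" where
  "Dp2hlr n = {(i, j). 1 \<le> i \<and> i \<le> j \<and> i + j \<le> 2 * n + 1}"

definition fillings :: "nat \<Rightarrow> (nat \<times> nat \<Rightarrow> nat) set" where
  "fillings n = {W. \<forall>p. p \<notin> Dp2hlr n \<longrightarrow> W p = 0}"

definition yvar :: "nat \<Rightarrow> (nat \<Rightarrow> 'a) \<Rightarrow> nat \<Rightarrow> 'a" where
  "yvar n x j = (if j \<le> n then x j else x (2 * n + 1 - j))"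

definition wt :: "nat \<Rightarrow> (nat \<Rightarrow> 'a::comm_monoid_mult) \<Rightarrow> (nat \<times> nat \<Rightarrow> nat) \<Rightarrow> 'a" where
  "wt n x W = (\<Prod>(i, j)\<in>Dp2hlr n.
      (if i \<noteq> j then (x i * yvar n x j) ^ W (i, j) else x i ^ W (i, i)))"

definition up_right_step :: "nat \<times> nat \<Rightarrow> nat \<times> nat \<Rightarrow> bool" where
  "up_right_step p q \<longleftrightarrow> q = (fst p + 1, snd p) \<or> q = (fst p, snd p + 1)"

definition p2hlr_paths :: "nat \<Rightarrow> (nat \<times> nat) list set" where
  "p2hlr_paths n = {ps. ps \<noteq> [] \<and> hd ps = (1, 1) \<and>
       fst (last ps) + snd (last ps) = 2 * n + 1 \<and>
       set ps \<subseteq> Dp2hlr n \<and>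
       (\<forall>k. Suc k < length ps \<longrightarrow> up_right_step (ps ! k) (ps ! Suc k))}"

definition Lp2hlr :: "nat \<Rightarrow> (nat \<times> nat \<Rightarrow> nat) \<Rightarrow> nat" where
  "Lp2hlr n W = Max ((\<lambda>ps. sum_list (map W ps)) ` p2hlr_paths n)"

text \<open>Partitions with at most n parts, as functions r \<mapsto> \<lambda>_r (rows indexed from 1).\<close>
definition partitions_le :: "nat \<Rightarrow> (nat \<Rightarrow> nat) set" where
  "partitions_le n = {lam. lam 0 = 0 \<and> (\<forall>r. r > n \<longrightarrow> lam r = 0) \<and>
                         (\<forall>r. 1 \<le> r \<longrightarrow> lam (Suc r) \<le> lam r)}"

definition cells :: "(nat \<Rightarrow> nat) \<Rightarrow> (nat \<times> nat) set" where
  "cells lam = {(r, c). 1 \<le> r \<and> 1 \<le> c \<and> c \<le> lam r}"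

text \<open>Letters of the alphabet 1 < 1bar < 2 < 2bar < ... < n < nbar are encoded
  as natural numbers: letter i is 2i-1 and letter ibar is 2i, so the encoding is
  order preserving.\<close>
definition king_tableaux :: "nat \<Rightarrow> (nat \<Rightarrow> nat) \<Rightarrow> (nat \<times> nat \<Rightarrow> nat) set" where
  "king_tableaux n lam = {T.
      (\<forall>p. p \<notin> cells lam \<longrightarrow> T p = 0) \<and>
      (\<forall>p\<in>cells lam. 1 \<le> T p \<and> T p \<le> 2 * n) \<and>
      (\<forall>r c. (r, c) \<in> cells lam \<and> (r, Suc c) \<in> cells lam \<longrightarrow> T (r, c) \<le> T (r, Suc c)) \<and>
      (\<forall>r c. (r, c) \<in> cells lam \<and> (Suc r, c) \<in> cells lam \<longrightarrow> T (r, c) < T (Suc r, c)) \<and>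
      (\<forall>r c. (r, c) \<in> cells lam \<longrightarrow> 2 * r - 1 \<le> T (r, c))}"

definition count_letter :: "(nat \<Rightarrow> nat) \<Rightarrow> (nat \<times> nat \<Rightarrow> nat) \<Rightarrow> nat \<Rightarrow> nat" where
  "count_letter lam T a = card {p \<in> cells lam. T p = a}"

definition sp_char :: "nat \<Rightarrow> (nat \<Rightarrow> 'a::field) \<Rightarrow> (nat \<Rightarrow> nat) \<Rightarrow> 'a" where
  "sp_char n x lam = (\<Sum>T\<in>king_tableaux n lam.
      \<Prod>i\<in>{1..n}. x i powi (int (count_letter lam T (2 * i - 1)) - int (count_letter lam T (2 * i))))"

end

theory Submission
  imports Defs
begin


definition ptn :: "nat \<Rightarrow> (nat \<Rightarrow> nat) \<Rightarrow> bool" where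
  "ptn k p \<longleftrightarrow> p 0 = 0 \<and> (\<forall>r>k. p r = 0) \<and> (\<forall>r\<ge>1. p (Suc r) \<le> p r)"

definition ilc :: "(nat \<Rightarrow> nat) \<Rightarrow> (nat \<Rightarrow> nat) \<Rightarrow> bool" where
  "ilc a b \<longleftrightarrow> (\<forall>r\<ge>1. a r \<le> b r \<and> b (Suc r) \<le> a r)"

definition emp :: "nat \<Rightarrow> nat" where "emp = (\<lambda>_. 0)"

definition loc :: "(nat \<Rightarrow> nat) \<Rightarrow> (nat \<Rightarrow> nat) \<Rightarrow> (nat \<Rightarrow> nat) \<Rightarrow> nat \<Rightarrow> (nat \<Rightarrow> nat)" where
  "loc m v p w = (\<lambda>r. if r = 0 then 0 else if r = 1 then max (m 1) (v 1) + w
      else max (m r) (v r) + min (m (r-1)) (v (r-1)) - p (r-1))"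

definition rloc :: "(nat \<Rightarrow> nat) \<Rightarrow> (nat \<Rightarrow> nat) \<Rightarrow> (nat \<Rightarrow> nat) \<Rightarrow> (nat \<Rightarrow> nat)" where
  "rloc m v l = (\<lambda>r. if r = 0 then 0 else min (m r) (v r) + max (m (Suc r)) (v (Suc r)) - l (Suc r))"

definition wloc :: "(nat \<Rightarrow> nat) \<Rightarrow> (nat \<Rightarrow> nat) \<Rightarrow> (nat \<Rightarrow> nat) \<Rightarrow> nat" where
  "wloc m v l = l 1 - max (m 1) (v 1)"

lemma loc_ilc1:
  assumes "ilc p m" "ilc p v"
  shows "ilc m (loc m v p w)"
  unfolding ilc_def
proof (intro allI impI)
  fix r :: nat assume r: "r \<ge> 1"
  have a: "m (Suc r) \<le> p r" "v (Suc r) \<le> p r" "p (r) \<le> m r" "p r \<le> v r"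
    using assms r unfolding ilc_def by auto
  have b: "p (r-1) \<le> m (r-1) \<and> p (r-1) \<le> v (r-1)" if "r \<ge> 2"
  proof -
    have "r - 1 \<ge> 1" using that by arith
    thus ?thesis using assms unfolding ilc_def by blast
  qed
  show "m r \<le> loc m v p w r \<and> loc m v p w (Suc r) \<le> m r"
  proof (cases "r = 1")
    case True thus ?thesis using a unfolding loc_def by auto
  next
    case False
    hence "r \<ge> 2" using r by arith
    thus ?thesis using a b[OF \<open>r \<ge> 2\<close>] r unfolding loc_def by (auto simp: max_def min_def)
  qed
qed

lemma loc_sym: "loc m v p w = loc v m p w"
  unfolding loc_def by (auto simp: max.commute min.commute)

lemma loc_ilc2:
  assumes "ilc p m" "ilc p v"
  shows "ilc v (loc m v p w)"
  using loc_ilc1[OF assms(2,1)] by (simp add: loc_sym)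

lemma rloc_loc:
  assumes "ilc p m" "ilc p v" "p 0 = 0"
  shows "rloc m v (loc m v p w) = p"
proof
  fix r
  show "rloc m v (loc m v p w) r = p r"
  proof (cases "r = 0")
    case True thus ?thesis using assms unfolding rloc_def by simp
  next
    case False
    have "p r \<le> m r" "p r \<le> v r" "m (Suc r) \<le> p r" "v (Suc r) \<le> p r"
      using assms False unfolding ilc_def by auto
    thus ?thesis using False unfolding rloc_def loc_def by auto
  qed
qed

lemma wloc_loc: "wloc m v (loc m v p w) = w"
  unfolding wloc_def loc_def by simp

lemma rloc_ilc1:
  assumes "ilc m l" "ilc v l"
  shows "ilc (rloc m v l) m"
  unfolding ilc_def
proof (intro allI impI)
  fix r :: nat assume r: "r \<ge> 1"
  have "l (Suc r) \<le> m r" "l (Suc r) \<le> v r" "m (Suc r) \<le> l (Suc r)" "v (Suc r) \<le> l (Suc r)"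
    using assms r unfolding ilc_def by auto
  thus "rloc m v l r \<le> m r \<and> m (Suc r) \<le> rloc m v l r"
    using r unfolding rloc_def by auto
qed

lemma rloc_sym: "rloc m v l = rloc v m l"
  unfolding rloc_def by (auto simp: max.commute min.commute)

lemma rloc_ilc2:
  assumes "ilc m l" "ilc v l"
  shows "ilc (rloc m v l) v"
  using rloc_ilc1[OF assms(2,1)] by (simp add: rloc_sym)

lemma loc_rloc:
  assumes "ilc m l" "ilc v l" "l 0 = 0"
  shows "loc m v (rloc m v l) (wloc m v l) = l"
proof
  fix r
  show "loc m v (rloc m v l) (wloc m v l) r = l r"
  proof (cases "r = 0")
    case True thus ?thesis using assms unfolding loc_def by simp
  next
    case False
    show ?thesis
    proof (cases "r = 1")
      case True
      have "m 1 \<le> l 1" "v 1 \<le> l 1" using assms unfolding ilc_def by auto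
      thus ?thesis using True unfolding loc_def wloc_def by auto
    next
      case r1: False
      obtain s where s: "r = Suc s" "s \<ge> 1" using False r1
        by (cases r) auto
      have "l r \<le> m s" "l r \<le> v s" "m r \<le> l r" "v r \<le> l r"
        using assms s unfolding ilc_def by auto
      thus ?thesis using s unfolding loc_def rloc_def by auto
    qed
  qed
qed

lemma ilc_ptn:
  assumes "ilc a b" "ptn k a" "b 0 = 0" "\<forall>r>k'. b r = 0"
  shows "ptn k' b"
  using assms unfolding ilc_def ptn_def by (meson le_trans)

lemma ilc_ptn2:
  assumes "ilc a b" "ptn k b" "a 0 = 0" "\<forall>r>k'. a r = 0"
  shows "ptn k' a"
  unfolding ptn_def
proof (intro conjI allI impI)
  fix r :: nat assume "r \<ge> 1"
  have "a (Suc r) \<le> b (Suc r)" "b (Suc r) \<le> a r" using assms(1) \<open>r \<ge> 1\<close> unfolding ilc_def by auto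
  thus "a (Suc r) \<le> a r" by simp
qed (use assms in auto)

lemma ilc_first: "ilc a b \<Longrightarrow> a 1 \<le> b 1"
  unfolding ilc_def by auto


definition psz :: "nat \<Rightarrow> (nat \<Rightarrow> nat) \<Rightarrow> nat" where
  "psz N p = (\<Sum>r\<in>{1..N}. p r)"

lemma loc_size_aux:
  assumes "ilc p m" "ilc p v" "N \<ge> 1"
  shows "psz N (loc m v p w) + psz N p + min (m N) (v N) = psz N m + psz N v + w + p N"
  using assms(3)
proof (induction N rule: dec_induct)
  case base
  show ?case unfolding psz_def loc_def by auto
next
  case (step N)
  have le: "p N \<le> m N" "p N \<le> v N" using assms step(1) unfolding ilc_def by auto
  have eq: "loc m v p w (Suc N) = max (m (Suc N)) (v (Suc N)) + min (m N) (v N) - p N"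
    unfolding loc_def using step(1) by auto
  have "psz (Suc N) (loc m v p w) = psz N (loc m v p w) + loc m v p w (Suc N)"
       "psz (Suc N) p = psz N p + p (Suc N)" "psz (Suc N) m = psz N m + m (Suc N)"
       "psz (Suc N) v = psz N v + v (Suc N)"
    unfolding psz_def using step(1) by simp_all
  thus ?case using step(3) eq le by (auto simp: max_def min_def)
qed

lemma loc_size:
  assumes "ilc p m" "ilc p v" "N \<ge> 1" "loc m v p w (Suc N) = 0"
  shows "psz N (loc m v p w) + psz N p = psz N m + psz N v + w"
proof -
  have le: "p N \<le> m N" "p N \<le> v N" "m (Suc N) \<le> p N" "v (Suc N) \<le> p N"
    using assms unfolding ilc_def by auto
  have "loc m v p w (Suc N) = max (m (Suc N)) (v (Suc N)) + min (m N) (v N) - p N"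
    unfolding loc_def using assms(3) by auto
  hence "min (m N) (v N) = p N" using assms(4) le by (auto simp: max_def min_def)
  thus ?thesis using loc_size_aux[OF assms(1-3), of w] by simp
qed


function grw :: "(nat \<times> nat \<Rightarrow> nat) \<Rightarrow> nat \<Rightarrow> nat \<Rightarrow> (nat \<Rightarrow> nat)" where
  "grw W a b = (if a = 0 \<or> b = 0 then emp else if b < a then grw W b a
     else loc (grw W (a-1) b) (grw W a (b-1)) (grw W (a-1) (b-1)) (W (a,b)))"
  by auto
termination by (relation "measure (\<lambda>(W,a,b). 2*(a+b) + (if b < a then 1 else 0))") auto

declare grw.simps[simp del]


lemma grw_0[simp]: "grw W 0 b = emp" "grw W a 0 = emp"
  by (subst grw.simps, simp)+

lemma grw_swap: "b < a \<Longrightarrow> grw W a b = grw W b a"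
  by (cases "b = 0") (simp, subst grw.simps, simp)

lemma grw_sym: "grw W a b = grw W b a"
  by (metis grw_swap linorder_neqE_nat)

lemma ptn_mono: "ptn k p \<Longrightarrow> k \<le> k' \<Longrightarrow> ptn k' p"
  unfolding ptn_def by auto

lemma grw_main: "1 \<le> a \<Longrightarrow> a \<le> b \<Longrightarrow>
   grw W a b = loc (grw W (a-1) b) (grw W a (b-1)) (grw W (a-1) (b-1)) (W (a,b))"
  by (subst grw.simps) auto

lemma ilc_emp[simp]: "ilc emp emp" unfolding ilc_def emp_def by auto
lemma ptn_emp[simp]: "ptn k emp" unfolding ptn_def emp_def by auto

definition gprop :: "(nat \<times> nat \<Rightarrow> nat) \<Rightarrow> nat \<Rightarrow> nat \<Rightarrow> bool" where
  "gprop W a b \<longleftrightarrow> (a \<ge> 1 \<and> b \<ge> 1 \<longrightarrow> ilc (grw W (a-1) b) (grw W a b) \<and> ilc (grw W a (b-1)) (grw W a b))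
      \<and> ptn (min a b) (grw W a b)"

lemma gprop_sym: "gprop W a b \<Longrightarrow> gprop W b a"
proof -
  assume h: "gprop W a b"
  have e: "grw W (b-1) a = grw W a (b-1)" "grw W b (a-1) = grw W (a-1) b" "grw W b a = grw W a b"
    using grw_sym by blast+
  show ?thesis using h unfolding gprop_def e by (simp add: min.commute)
qed

lemma gprop_all: "gprop W a b"
proof (induction "a+b" arbitrary: a b rule: less_induct)
  case less
  have main: "gprop W c d" if cd: "c + d = a + b" "c \<le> d" for c d
  proof (cases "c = 0")
    case True thus ?thesis unfolding gprop_def by auto
  next
    case False
    hence a1: "c \<ge> 1" by simp
    have ab: "c \<le> d" by (rule cd(2))
    let ?m = "grw W (c-1) d" and ?v = "grw W c (d-1)" and ?p = "grw W (c-1) (d-1)"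
    have IH1: "gprop W (c-1) d" using less(1)[of "c-1" d] cd a1 by simp
    have IH2: "gprop W c (d-1)" using less(1)[of c "d-1"] cd a1 ab by simp
    have pm: "ilc ?p ?m"
    proof (cases "c = 1")
      case True thus ?thesis by simp
    next
      case False 
      hence "c - 1 \<ge> 1" using a1 by arith
      have e: "c - 1 - 1 = c - 2" by simp
      show ?thesis using IH1 \<open>c - 1 \<ge> 1\<close> ab unfolding gprop_def e by auto
    qed
    have pv: "ilc ?p ?v"
    proof (cases "d = 1")
      case True hence "c = 1" using a1 ab by simp
      thus ?thesis using True by simp
    next
      case False thus ?thesis using IH2 a1 ab unfolding gprop_def by auto
    qed
    have g: "grw W c d = loc ?m ?v ?p (W (c,d))" using grw_main[OF a1 ab] .
    have i1: "ilc ?m (grw W c d)" unfolding g by (rule loc_ilc1[OF pm pv])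
    have i2: "ilc ?v (grw W c d)" unfolding g by (rule loc_ilc2[OF pm pv])
    have "min (c-1) d = c-1" using ab by simp
    hence pmt: "ptn (c-1) ?m" using IH1 by (simp add: gprop_def)
    have pvt: "ptn c ?v" using IH2 unfolding gprop_def using ptn_mono min.cobounded1 by blast
    have z: "\<forall>r>c. grw W c d r = 0"
    proof (intro allI impI)
      fix r assume r: "r > c"
      have "?m r = 0" "?m (r-1) = 0" "?v r = 0" using pmt pvt r a1 unfolding ptn_def by auto
      thus "grw W c d r = 0" unfolding g loc_def using r a1 by auto
    qed
    have z0: "grw W c d 0 = 0" unfolding g loc_def by simp
    have "ptn c (grw W c d)" by (rule ilc_ptn[OF i1 pmt z0 z])
    thus ?thesis using i1 i2 ab unfolding gprop_def by (simp add: min_def)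
  qed
  show ?case
  proof (cases "a \<le> b")
    case True thus ?thesis using main by simp
  next
    case False
    hence "gprop W b a" using main[of b a] by simp
    thus ?thesis by (rule gprop_sym)
  qed
qed

lemma grw_first: "1 \<le> a \<Longrightarrow> a \<le> b \<Longrightarrow>
   grw W a b 1 = max (grw W (a-1) b 1) (grw W a (b-1) 1) + W (a,b)"
  by (subst grw_main) (auto simp: loc_def)

lemma grw_ptn: "ptn (min a b) (grw W a b)"
  using gprop_all unfolding gprop_def by blast

lemma grw_ilc1: "1 \<le> a \<Longrightarrow> ilc (grw W (a-1) b) (grw W a b)"
  using gprop_all[of W a b] unfolding gprop_def by (cases "b = 0") auto

lemma grw_ilc2: "1 \<le> b \<Longrightarrow> ilc (grw W a (b-1)) (grw W a b)"
  using gprop_all[of W a b] unfolding gprop_def by (cases "a = 0") auto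

definition Ws :: "(nat \<times> nat \<Rightarrow> nat) \<Rightarrow> nat \<times> nat \<Rightarrow> nat" where
  "Ws W p = W (min (fst p) (snd p), max (fst p) (snd p))"

definition SS :: "(nat \<times> nat \<Rightarrow> nat) \<Rightarrow> nat \<Rightarrow> nat \<Rightarrow> nat" where
  "SS W a b = (\<Sum>i\<in>{1..a}. \<Sum>j\<in>{1..b}. Ws W (i,j))"

lemma SS_sym: "SS W a b = SS W b a"
  unfolding SS_def Ws_def
  by (subst sum.swap) (simp add: min.commute max.commute)

lemma SS_rec: "1 \<le> a \<Longrightarrow> 1 \<le> b \<Longrightarrow>
   SS W a b + SS W (a-1) (b-1) = SS W (a-1) b + SS W a (b-1) + Ws W (a,b)"
proof -
  assume a: "1 \<le> a" and b: "1 \<le> b"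
  obtain a' b' where ab: "a = Suc a'" "b = Suc b'" using a b by (cases a; cases b) auto
  show ?thesis unfolding SS_def ab by (simp add: sum.distrib)
qed

lemma grw_size: "1 \<le> n \<Longrightarrow> min a b \<le> n \<Longrightarrow> psz n (grw W a b) = SS W a b"
proof (induction "a+b" arbitrary: a b rule: less_induct)
  case less
  have main: "psz n (grw W c d) = SS W c d" if cd: "c + d = a + b" "c \<le> d" "c \<le> n" for c d
  proof (cases "c = 0")
    case True thus ?thesis unfolding SS_def psz_def by (simp add: emp_def)
  next
    case False
    hence a1: "c \<ge> 1" by simp
    have IH1: "psz n (grw W (c-1) d) = SS W (c-1) d" using less(1)[of "c-1" d] less(2) cd a1 by simp
    have IH2: "psz n (grw W c (d-1)) = SS W c (d-1)" using less(1)[of c "d-1"] less(2) cd a1 by simp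
    have IH3: "psz n (grw W (c-1) (d-1)) = SS W (c-1) (d-1)" using less(1)[of "c-1" "d-1"] less(2) cd a1 by simp
    have pm: "ilc (grw W (c-1) (d-1)) (grw W (c-1) d)" 
      using grw_ilc2[of d W "c-1"] cd a1 by simp
    have pv: "ilc (grw W (c-1) (d-1)) (grw W c (d-1))" 
      using grw_ilc1[of c W "d-1"] a1 by simp
    have z: "grw W c d (Suc n) = 0" using grw_ptn[of c d W] cd unfolding ptn_def by auto
    have g: "grw W c d = loc (grw W (c-1) d) (grw W c (d-1)) (grw W (c-1) (d-1)) (W (c,d))"
      using grw_main[OF a1 cd(2)] .
    have "psz n (grw W c d) + psz n (grw W (c-1) (d-1)) = psz n (grw W (c-1) d) + psz n (grw W c (d-1)) + W (c,d)"
      using loc_size[OF pm pv less(2), of "W (c,d)"] z unfolding g[symmetric] by simp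
    moreover have "Ws W (c,d) = W (c,d)" unfolding Ws_def using cd by simp
    ultimately show ?thesis using SS_rec[of c d W] IH1 IH2 IH3 a1 cd by simp
  qed
  show ?case
  proof (cases "a \<le> b")
    case True thus ?thesis using main less(3) by simp
  next
    case False
    thus ?thesis using main[of b a] less(3) grw_sym[of W a b] SS_sym[of W a b] by simp
  qed
qed


function bgr :: "nat \<Rightarrow> (nat \<Rightarrow> nat \<Rightarrow> nat) \<Rightarrow> nat \<Rightarrow> nat \<Rightarrow> (nat \<Rightarrow> nat)" where
  "bgr n q a b = (if b < a then bgr n q b a
     else if a = 0 then emp
     else if a + b = 2*n+1 then q (2*a-1)
     else if a + b = 2*n then q (2*a)
     else if a + b > 2*n+1 then emp
     else rloc (bgr n q a (b+1)) (bgr n q (a+1) b) (bgr n q (a+1) (b+1)))"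
  by auto
termination
  by (relation "measure (\<lambda>(n,q,a,b). 2*(2*n+2-(a+b)) + (if b < a then 1 else 0))") auto

declare bgr.simps[simp del]

lemma bgr_0[simp]: "bgr n q 0 b = emp" "bgr n q a 0 = emp"
  by (subst bgr.simps, simp)+

lemma bgr_swap: "b < a \<Longrightarrow> bgr n q a b = bgr n q b a"
  by (subst bgr.simps) simp

lemma bgr_sym: "bgr n q a b = bgr n q b a"
  by (metis bgr_swap linorder_neqE_nat)

lemma bgr_top: "1 \<le> a \<Longrightarrow> a \<le> b \<Longrightarrow> a + b = 2*n+1 \<Longrightarrow> bgr n q a b = q (2*a-1)"
  by (subst bgr.simps) simp

lemma bgr_top2: "1 \<le> a \<Longrightarrow> a \<le> b \<Longrightarrow> a + b = 2*n \<Longrightarrow> bgr n q a b = q (2*a)"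
  by (subst bgr.simps) simp

lemma bgr_int: "1 \<le> a \<Longrightarrow> a \<le> b \<Longrightarrow> a + b < 2*n \<Longrightarrow>
   bgr n q a b = rloc (bgr n q a (b+1)) (bgr n q (a+1) b) (bgr n q (a+1) (b+1))"
  by (subst bgr.simps) simp

definition UD :: "nat \<Rightarrow> nat \<Rightarrow> (nat \<Rightarrow> nat \<Rightarrow> nat) set" where
  "UD n u = {q. (\<forall>k. (k = 0 \<or> 2*n < k) \<longrightarrow> q k = emp) \<and>
     (\<forall>k\<in>{1..2*n}. ptn ((k+1) div 2) (q k) \<and> q k 1 \<le> u) \<and>
     (\<forall>i\<in>{1..n}. ilc (q (2*i-2)) (q (2*i-1)) \<and> ilc (q (2*i)) (q (2*i-1)))}"

definition UDs :: "nat \<Rightarrow> (nat \<Rightarrow> nat \<Rightarrow> nat) \<Rightarrow> bool" where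
  "UDs n q \<longleftrightarrow> q 0 = emp \<and>
     (\<forall>k\<in>{1..2*n}. ptn ((k+1) div 2) (q k)) \<and>
     (\<forall>i\<in>{1..n}. ilc (q (2*i-2)) (q (2*i-1)) \<and> ilc (q (2*i)) (q (2*i-1)))"

lemma UD_UDs: "q \<in> UD n u \<Longrightarrow> UDs n q"
  unfolding UD_def UDs_def by auto

lemma ilc_emp_left: "ptn 1 p \<Longrightarrow> ilc emp p"
  unfolding ilc_def ptn_def emp_def by auto

definition bprop :: "nat \<Rightarrow> (nat \<Rightarrow> nat \<Rightarrow> nat) \<Rightarrow> nat \<Rightarrow> nat \<Rightarrow> bool" where
  "bprop n q a b \<longleftrightarrow> ilc (bgr n q a b) (bgr n q (a+1) b) \<and> ilc (bgr n q a b) (bgr n q a (b+1))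
      \<and> ptn a (bgr n q a b)"

lemma bgr_ptn_top:
  assumes "UDs n q" "a \<le> b" "a + b = 2*n+1"
  shows "ptn a (bgr n q a b)"
proof (cases "a = 0")
  case True thus ?thesis by simp
next
  case False
  hence "2*a-1 \<in> {1..2*n}" using assms by auto
  hence "ptn ((2*a-1+1) div 2) (q (2*a-1))" using assms(1) unfolding UDs_def by blast
  moreover have "(2*a-1+1) div 2 = a" using False by simp
  ultimately show ?thesis using assms bgr_top[of a b n q] False by simp
qed

lemma bprop_base:
  assumes "UDs n q" "a \<le> b" "a + b = 2*n" "1 \<le> n"
  shows "bprop n q a b"
proof (cases "a = 0")
  case True
  have "ptn 1 (bgr n q 1 b)" using bgr_ptn_top[OF assms(1), of 1 b] assms True by auto
  thus ?thesis using True unfolding bprop_def by (simp add: ilc_emp_left)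
next
  case False
  have an: "a \<le> n" using assms by simp
  have i2: "ilc (q (2*a)) (q (2*a-1))" using assms(1) False an unfolding UDs_def by auto
  have t: "bgr n q a b = q (2*a)" using bgr_top2[of a b n q] assms False by simp
  have e2: "bgr n q a (b+1) = q (2*a-1)" using bgr_top[of a "b+1" n q] assms False by simp
  have e1: "ilc (q (2*a)) (bgr n q (a+1) b)"
  proof (cases "a + 1 \<le> b")
    case True
    hence "a + 1 \<le> n" using assms by simp
    moreover have "bgr n q (a+1) b = q (2*(a+1)-1)" using bgr_top[of "a+1" b n q] True assms by simp
    moreover have "a+1 \<in> {1..n}" using \<open>a+1 \<le> n\<close> by simp
    hence "ilc (q (2*(a+1)-2)) (q (2*(a+1)-1))" using assms(1) unfolding UDs_def by blast
    ultimately show ?thesis by simp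
  next
    case False
    hence "bgr n q (a+1) b = bgr n q b (a+1)" by (simp add: bgr_sym)
    moreover have "b = a" using False assms by simp
    moreover have "bgr n q a (a+1) = q (2*a-1)" using bgr_top[of a "a+1" n q] assms \<open>a \<noteq> 0\<close> \<open>b = a\<close> by simp
    ultimately show ?thesis using i2 by simp
  qed
  have "2*a \<in> {1..2*n}" using False an by auto
  hence "ptn ((2*a+1) div 2) (q (2*a))" using assms(1) unfolding UDs_def by blast
  moreover have "(2*a+1) div 2 = a" by simp
  ultimately have "ptn a (q (2*a))" by simp
  thus ?thesis unfolding bprop_def t using e1 e2 i2 by simp
qed

lemma rloc_emp:
  assumes "ilc v l" "v 0 = 0"
  shows "rloc emp v l = emp"
proof
  fix r show "rloc emp v l r = emp r"
    using assms unfolding rloc_def emp_def ilc_def by (cases "r = 0") auto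
qed

lemma bprop_all:
  assumes "UDs n q" "1 \<le> n"
  shows "a \<le> b \<Longrightarrow> a + b \<le> 2*n \<Longrightarrow> bprop n q a b"
proof (induction "2*n - (a+b)" arbitrary: a b rule: less_induct)
  case less
  show ?case
  proof (cases "a + b = 2*n")
    case True thus ?thesis using bprop_base[OF assms(1) _ _ assms(2)] less by simp
  next
    case False
    hence lt: "a + b < 2*n" using less by simp
    have IH1: "bprop n q a (b+1)" using less(1)[of a "b+1"] less(2) lt by simp
    have ilm: "ilc (bgr n q a (b+1)) (bgr n q (a+1) (b+1))" using IH1 unfolding bprop_def by simp
    have ilv: "ilc (bgr n q (a+1) b) (bgr n q (a+1) (b+1))"
    proof (cases "a + 1 \<le> b")
      case True
      hence "bprop n q (a+1) b" using less(1)[of "a+1" b] lt by simp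
      thus ?thesis unfolding bprop_def by simp
    next
      case False
      hence "b = a" using less(2) by simp
      thus ?thesis using ilm bgr_swap[of a "Suc a" n q] by simp
    qed
    have pm: "ptn a (bgr n q a (b+1))" using IH1 unfolding bprop_def by simp
    show ?thesis
    proof (cases "a = 0")
      case True
      have "ptn (a+1) (bgr n q (a+1) b)"
      proof (cases "a + 1 \<le> b")
        case True
        hence "bprop n q (a+1) b" using less(1)[of "a+1" b] lt by simp
        thus ?thesis unfolding bprop_def by simp
      next
        case False
        hence "b = a" using less(2) by simp
        thus ?thesis using pm ptn_mono[of a _ "a+1"] bgr_swap[of a "Suc a" n q] by simp
      qed
      thus ?thesis using True unfolding bprop_def by (simp add: ilc_emp_left)
    next
      case a0: False
      let ?m = "bgr n q a (b+1)" and ?v = "bgr n q (a+1) b" and ?l = "bgr n q (a+1) (b+1)"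
      have g: "bgr n q a b = rloc ?m ?v ?l" using bgr_int[of a b n q] a0 less(2) lt by simp
      have i1: "ilc (bgr n q a b) ?m" unfolding g by (rule rloc_ilc1[OF ilm ilv])
      have i2: "ilc (bgr n q a b) ?v" unfolding g by (rule rloc_ilc2[OF ilm ilv])
      have z: "\<forall>r>a. bgr n q a b r = 0"
      proof (intro allI impI)
        fix r assume r: "r > a"
        have "?m r = 0" using pm r unfolding ptn_def by auto
        moreover have "?m (Suc r) \<le> ?l (Suc r)" "?v (Suc r) \<le> ?l (Suc r)"
          using ilm ilv r unfolding ilc_def by auto
        ultimately show "bgr n q a b r = 0" unfolding g rloc_def by auto
      qed
      have z0: "bgr n q a b 0 = 0" unfolding g rloc_def by simp
      have "ptn a (bgr n q a b)" by (rule ilc_ptn2[OF i1 pm z0 z])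
      thus ?thesis unfolding bprop_def using i1 i2 by simp
    qed
  qed
qed

lemma bgr_edge1: "UDs n q \<Longrightarrow> 1 \<le> n \<Longrightarrow> a \<le> b \<Longrightarrow> a + b \<le> 2*n \<Longrightarrow>
   ilc (bgr n q a b) (bgr n q (a+1) b)"
  using bprop_all unfolding bprop_def by blast

lemma bgr_edge2: "UDs n q \<Longrightarrow> 1 \<le> n \<Longrightarrow> a \<le> b \<Longrightarrow> a + b \<le> 2*n \<Longrightarrow>
   ilc (bgr n q a b) (bgr n q a (b+1))"
  using bprop_all unfolding bprop_def by blast

lemma bgr_ptn: "UDs n q \<Longrightarrow> 1 \<le> n \<Longrightarrow> a \<le> b \<Longrightarrow> a + b \<le> 2*n+1 \<Longrightarrow>
   ptn a (bgr n q a b)"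
  using bprop_all[of n q a b] bgr_ptn_top[of n q a b] unfolding bprop_def
  by (cases "a + b = 2*n+1") auto

lemma bgr_corner:
  assumes "UDs n q" "1 \<le> n" "a \<le> b" "a + b < 2*n"
  shows "bgr n q a b = rloc (bgr n q a (b+1)) (bgr n q (a+1) b) (bgr n q (a+1) (b+1))"
proof (cases "a = 0")
  case False thus ?thesis using bgr_int[of a b n q] assms by simp
next
  case True
  have "ilc (bgr n q 1 b) (bgr n q 1 (b+1))"
  proof (cases "b = 0")
    case True
    have "ptn 1 (bgr n q 1 1)" using bgr_ptn[OF assms(1,2), of 1 1] assms by simp
    thus ?thesis using True by (simp add: ilc_emp_left)
  next
    case False thus ?thesis using bgr_edge2[OF assms(1,2), of 1 b] assms True by simp
  qed
  hence "rloc emp (bgr n q 1 b) (bgr n q 1 (b+1)) = emp"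
    by (rule rloc_emp) (simp add: bgr_sym[of n q 1 b], cases "b = 0", simp add: emp_def,
        use bgr_ptn[OF assms(1,2), of 1 b] assms True in \<open>simp add: ptn_def\<close>)
  thus ?thesis using True by simp
qed

definition Wq :: "nat \<Rightarrow> (nat \<Rightarrow> nat \<Rightarrow> nat) \<Rightarrow> nat \<times> nat \<Rightarrow> nat" where
  "Wq n q = (\<lambda>(i,j). if (i,j) \<in> Dp2hlr n then wloc (bgr n q (i-1) j) (bgr n q i (j-1)) (bgr n q i j) else 0)"

lemma grw_Wq:
  assumes "UDs n q" "1 \<le> n"
  shows "a + b \<le> 2*n+1 \<Longrightarrow> grw (Wq n q) a b = bgr n q a b"
proof (induction "a+b" arbitrary: a b rule: less_induct)
  case less
  have main: "grw (Wq n q) c d = bgr n q c d" if cd: "c + d = a + b" "c \<le> d" for c d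
  proof (cases "c = 0")
    case True thus ?thesis by simp
  next
    case False
    hence c1: "1 \<le> c" by simp
    let ?M = "bgr n q (c-1) d" and ?V = "bgr n q c (d-1)" and ?L = "bgr n q c d" and ?P = "bgr n q (c-1) (d-1)"
    have IH1: "grw (Wq n q) (c-1) d = ?M" using less(1)[of "c-1" d] less(2) cd c1 by simp
    have IH2: "grw (Wq n q) c (d-1) = ?V" using less(1)[of c "d-1"] less(2) cd c1 by simp
    have IH3: "grw (Wq n q) (c-1) (d-1) = ?P" using less(1)[of "c-1" "d-1"] less(2) cd c1 by simp
    have D: "(c,d) \<in> Dp2hlr n" using cd c1 less(2) unfolding Dp2hlr_def by auto
    have w: "Wq n q (c,d) = wloc ?M ?V ?L" using D unfolding Wq_def by simp
    have corner: "?P = rloc ?M ?V ?L"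
      using bgr_corner[OF assms, of "c-1" "d-1"] cd c1 less(2) by simp
    have iM: "ilc ?M ?L" using bgr_edge1[OF assms, of "c-1" d] cd c1 less(2) by simp
    have iV: "ilc ?V ?L"
    proof (cases "c \<le> d - 1")
      case True thus ?thesis using bgr_edge2[OF assms, of c "d-1"] cd c1 less(2) by simp
    next
      case False
      hence "d = c" using cd by simp
      thus ?thesis using iM bgr_sym[of n q c "c-1"] by simp
    qed
    have L0: "?L 0 = 0" using bgr_ptn[OF assms, of c d] cd less(2) unfolding ptn_def by simp
    have "grw (Wq n q) c d = loc ?M ?V ?P (wloc ?M ?V ?L)"
      using grw_main[OF c1 cd(2), of "Wq n q"] IH1 IH2 IH3 w by simp
    also have "\<dots> = ?L" unfolding corner by (rule loc_rloc[OF iM iV L0])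
    finally show ?thesis .
  qed
  show ?case
  proof (cases "a \<le> b")
    case True thus ?thesis using main by simp
  next
    case False
    thus ?thesis using main[of b a] grw_sym[of "Wq n q" a b] bgr_sym[of n q a b] by simp
  qed
qed

definition Phi :: "nat \<Rightarrow> (nat \<times> nat \<Rightarrow> nat) \<Rightarrow> nat \<Rightarrow> nat \<Rightarrow> nat" where
  "Phi n W = (\<lambda>k. if k = 0 \<or> 2*n < k then emp else if odd k then grw W ((k+1) div 2) (2*n+1 - (k+1) div 2)
      else grw W (k div 2) (2*n - k div 2))"

lemma Phi_odd: "1 \<le> a \<Longrightarrow> a \<le> n \<Longrightarrow> Phi n W (2*a-1) = grw W a (2*n+1-a)"
  unfolding Phi_def by auto

lemma Phi_even: "a \<le> n \<Longrightarrow> Phi n W (2*a) = grw W a (2*n-a)"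
  unfolding Phi_def by auto

lemma Phi_Wq:
  assumes "q \<in> UD n u" "1 \<le> n"
  shows "Phi n (Wq n q) = q"
proof
  fix k
  have U: "UDs n q" using assms(1) by (rule UD_UDs)
  show "Phi n (Wq n q) k = q k"
  proof (cases "k = 0 \<or> 2*n < k")
    case True thus ?thesis using assms(1) unfolding Phi_def UD_def by auto
  next
    case False
    show ?thesis
    proof (cases "odd k")
      case True
      then obtain m where m: "k = 2*m+1" by (auto elim!: oddE)
      define a where "a = m + 1"
      have a: "k = 2*a-1" "1 \<le> a" "a \<le> n" using m False unfolding a_def by auto
      have "Phi n (Wq n q) k = grw (Wq n q) a (2*n+1-a)" using Phi_odd[of a n] a by simp
      also have "\<dots> = bgr n q a (2*n+1-a)" using grw_Wq[OF U assms(2)] a by simp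
      also have "\<dots> = q (2*a-1)" using bgr_top[of a "2*n+1-a" n q] a by simp
      finally show ?thesis using a by simp
    next
      case ev: False
      then obtain a where a: "k = 2*a" "1 \<le> a" "a \<le> n" using False by (auto elim!: evenE)
      have "Phi n (Wq n q) k = grw (Wq n q) a (2*n-a)" using Phi_even[of a n] a by simp
      also have "\<dots> = bgr n q a (2*n-a)" using grw_Wq[OF U assms(2)] a by simp
      also have "\<dots> = q (2*a)" using bgr_top2[of a "2*n-a" n q] a by simp
      finally show ?thesis using a by simp
    qed
  qed
qed

lemma Phi_ilc:
  assumes i: "i \<in> {1..n}"
  shows "ilc (Phi n W (2*i-2)) (Phi n W (2*i-1)) \<and> ilc (Phi n W (2*i)) (Phi n W (2*i-1))"
proof -
  have e1: "Phi n W (2*i-1) = grw W i (2*n+1-i)" using Phi_odd[of i n W] i by simp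
  have e0: "Phi n W (2*i-2) = grw W (i-1) (2*n+1-i)"
  proof (cases "i = 1")
    case True thus ?thesis unfolding Phi_def by simp
  next
    case False
    have "2*i-2 = 2*(i-1)" "2*n - (i-1) = 2*n+1-i" "i - 1 \<le> n" using i by auto
    thus ?thesis using Phi_even[of "i-1" n W] by simp
  qed
  have e2: "Phi n W (2*i) = grw W i (2*n-i)" using Phi_even[of i n W] i by simp
  have ee: "1 \<le> 2*n+1-i" using i by auto
  show ?thesis
    unfolding e0 e1 e2 using grw_ilc1[of i W "2*n+1-i"] grw_ilc2[of "2*n+1-i" W i] i ee by simp
qed

lemma Phi_UDs:
  assumes "1 \<le> n"
  shows "UDs n (Phi n W)"
  unfolding UDs_def
proof (intro conjI ballI)
  show "Phi n W 0 = emp" unfolding Phi_def by simp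
next
  fix k assume k: "k \<in> {1..2*n}"
  show "ptn ((k+1) div 2) (Phi n W k)"
  proof (cases "odd k")
    case True
    then obtain a where a: "k = 2*a+1" by (auto elim!: oddE)
    have "min (a+1) (2*n+1-(a+1)) = a+1" using k a by auto
    thus ?thesis using grw_ptn[of "a+1" "2*n+1-(a+1)" W] k a unfolding Phi_def by auto
  next
    case False
    then obtain a where a: "k = 2*a" by (auto elim!: evenE)
    have "min a (2*n-a) = a" using k a by auto
    thus ?thesis using grw_ptn[of a "2*n-a" W] k a unfolding Phi_def by auto
  qed
next
  fix i assume i: "i \<in> {1..n}"
  show "ilc (Phi n W (2*i-2)) (Phi n W (2*i-1))" using Phi_ilc[OF i] by simp
next
  fix i assume i: "i \<in> {1..n}"
  show "ilc (Phi n W (2*i)) (Phi n W (2*i-1))" using Phi_ilc[OF i] by simp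
qed
lemma bgr_Phi:
  assumes "1 \<le> n"
  shows "a + b \<le> 2*n+1 \<Longrightarrow> bgr n (Phi n W) a b = grw W a b"
proof (induction "2*n+1-(a+b)" arbitrary: a b rule: less_induct)
  case less
  have main: "bgr n (Phi n W) c d = grw W c d" if cd: "c + d = a + b" "c \<le> d" for c d
  proof (cases "c = 0")
    case True thus ?thesis by simp
  next
    case False
    hence c1: "1 \<le> c" by simp
    show ?thesis
    proof (cases "c + d = 2*n+1")
      case True
      have "c \<le> n" "d = 2*n+1-c" using True cd by simp_all
      thus ?thesis using bgr_top[of c d n "Phi n W"] Phi_odd[of c n W] True cd c1 by simp
    next
      case F1: False
      show ?thesis
      proof (cases "c + d = 2*n")
        case True
        have "c \<le> n" "d = 2*n-c" using True cd by simp_all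
        thus ?thesis using bgr_top2[of c d n "Phi n W"] Phi_even[of c n W] True cd c1 by simp
      next
        case F2: False
        hence lt: "c + d < 2*n" using F1 cd less(2) by simp
        have IH1: "bgr n (Phi n W) c (d+1) = grw W c (d+1)" using less(1)[of c "d+1"] lt cd by simp
        have IH2: "bgr n (Phi n W) (c+1) d = grw W (c+1) d" using less(1)[of "c+1" d] lt cd by simp
        have IH3: "bgr n (Phi n W) (c+1) (d+1) = grw W (c+1) (d+1)" using less(1)[of "c+1" "d+1"] lt cd by simp
        have "bgr n (Phi n W) c d = rloc (grw W c (d+1)) (grw W (c+1) d) (grw W (c+1) (d+1))"
          using bgr_int[of c d n "Phi n W"] c1 cd lt IH1 IH2 IH3 by simp
        also have "grw W (c+1) (d+1) = loc (grw W c (d+1)) (grw W (c+1) d) (grw W c d) (W (c+1,d+1))"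
          using grw_main[of "c+1" "d+1" W] cd by simp
        also have "rloc (grw W c (d+1)) (grw W (c+1) d) \<dots> = grw W c d"
          apply (rule rloc_loc)
          using grw_ilc2[of "d+1" W c] grw_ilc1[of "c+1" W d] grw_ptn[of c d W] unfolding ptn_def by auto
        finally show ?thesis .
      qed
    qed
  qed
  show ?case
  proof (cases "a \<le> b")
    case True thus ?thesis using main by simp
  next
    case False
    thus ?thesis using main[of b a] grw_sym[of W a b] bgr_sym[of n "Phi n W" a b] by simp
  qed
qed

lemma Wq_Phi:
  assumes "W \<in> fillings n" "1 \<le> n"
  shows "Wq n (Phi n W) = W"
proof
  fix p :: "nat \<times> nat"
  obtain i j where p: "p = (i,j)" by (cases p)
  show "Wq n (Phi n W) p = W p"
  proof (cases "(i,j) \<in> Dp2hlr n")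
    case False thus ?thesis using assms(1) p unfolding Wq_def fillings_def by auto
  next
    case True
    hence ij: "1 \<le> i" "i \<le> j" "i + j \<le> 2*n+1" unfolding Dp2hlr_def by auto
    have "Wq n (Phi n W) (i,j) = wloc (grw W (i-1) j) (grw W i (j-1)) (grw W i j)"
      using True bgr_Phi[OF assms(2)] ij unfolding Wq_def by simp
    also have "\<dots> = W (i,j)" using grw_main[OF ij(1,2), of W] wloc_loc by simp
    finally show ?thesis using p by simp
  qed
qed


definition steps :: "(nat \<times> nat) list \<Rightarrow> bool" where
  "steps ps \<longleftrightarrow> (\<forall>k. Suc k < length ps \<longrightarrow> up_right_step (ps!k) (ps!Suc k))"

lemma steps_snoc: "steps (xs@[q]) \<longleftrightarrow> steps xs \<and> (xs \<noteq> [] \<longrightarrow> up_right_step (last xs) q)"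
proof
  assume h: "steps (xs@[q])"
  have "steps xs" unfolding steps_def
  proof (intro allI impI)
    fix k assume k: "Suc k < length xs"
    thus "up_right_step (xs!k) (xs!Suc k)" using h[unfolded steps_def, rule_format, of k] k
      by (simp add: nth_append)
  qed
  moreover have "xs \<noteq> [] \<longrightarrow> up_right_step (last xs) q"
  proof
    assume ne: "xs \<noteq> []"
    have "Suc (length xs - 1) < length (xs@[q])" using ne by simp
    hence "up_right_step ((xs@[q])!(length xs - 1)) ((xs@[q])!Suc (length xs - 1))"
      using h unfolding steps_def by blast
    thus "up_right_step (last xs) q" using ne by (simp add: nth_append last_conv_nth)
  qed
  ultimately show "steps xs \<and> (xs \<noteq> [] \<longrightarrow> up_right_step (last xs) q)" by simp
next
  assume h: "steps xs \<and> (xs \<noteq> [] \<longrightarrow> up_right_step (last xs) q)"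
  show "steps (xs@[q])" unfolding steps_def
  proof (intro allI impI)
    fix k assume k: "Suc k < length (xs@[q])"
    show "up_right_step ((xs@[q])!k) ((xs@[q])!Suc k)"
    proof (cases "Suc k < length xs")
      case True thus ?thesis using h unfolding steps_def by (simp add: nth_append)
    next
      case False
      hence kk: "k = length xs - 1" "xs \<noteq> []" using k by auto
      thus ?thesis using h by (simp add: nth_append last_conv_nth)
    qed
  qed
qed

lemma path_le:
  "ps \<noteq> [] \<Longrightarrow> hd ps = (1,1) \<Longrightarrow> set ps \<subseteq> Dp2hlr n \<Longrightarrow> steps ps \<Longrightarrow>
   sum_list (map W ps) \<le> grw W (fst (last ps)) (snd (last ps)) 1"
proof (induction ps rule: rev_induct)
  case Nil thus ?case by simp
next
  case (snoc q xs)
  show ?case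
  proof (cases "xs = []")
    case True
    hence "q = (1,1)" using snoc by simp
    thus ?thesis using True grw_first[of 1 1 W] by simp
  next
    case False
    obtain a b where q: "q = (a,b)" by (cases q)
    have qD: "1 \<le> a" "a \<le> b" using snoc(4) q unfolding Dp2hlr_def by auto
    have IH: "sum_list (map W xs) \<le> grw W (fst (last xs)) (snd (last xs)) 1"
      using snoc False steps_snoc[of xs q] by (simp add: hd_append)
    have st: "up_right_step (last xs) q" using snoc(5) False steps_snoc by blast
    have "grw W (fst (last xs)) (snd (last xs)) 1 \<le> max (grw W (a-1) b 1) (grw W a (b-1) 1)"
      using st q unfolding up_right_step_def by auto
    thus ?thesis using IH grw_first[OF qD, of W] q by simp
  qed
qed

lemma path_ex:
  "(a,b) \<in> Dp2hlr n \<Longrightarrow> \<exists>ps. ps \<noteq> [] \<and> hd ps = (1,1) \<and> last ps = (a,b) \<and> set ps \<subseteq> Dp2hlr n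
      \<and> steps ps \<and> sum_list (map W ps) = grw W a b 1"
proof (induction "a+b" arbitrary: a b rule: less_induct)
  case less
  have ab: "1 \<le> a" "a \<le> b" "a + b \<le> 2*n+1" using less(2) unfolding Dp2hlr_def by auto
  show ?case
  proof (cases "a = 1 \<and> b = 1")
    case True
    thus ?thesis using less(2) grw_first[of 1 1 W] unfolding steps_def
      by (intro exI[of _ "[(1,1)]"]) (auto simp: emp_def)
  next
    case False
    have "\<exists>c d. (c,d) \<in> Dp2hlr n \<and> c + d < a + b \<and> up_right_step (c,d) (a,b) \<and>
            grw W c d 1 = max (grw W (a-1) b 1) (grw W a (b-1) 1)"
    proof (cases "a = 1")
      case True
      hence "b \<ge> 2" using False ab by simp
      thus ?thesis using True ab unfolding Dp2hlr_def up_right_step_def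
        by (intro exI[of _ 1] exI[of _ "b-1"]) (auto simp: emp_def)
    next
      case a2: False
      show ?thesis
      proof (cases "a = b")
        case True
        have "grw W a (b-1) = grw W (a-1) b" using True grw_sym by metis
        thus ?thesis using True a2 ab unfolding Dp2hlr_def up_right_step_def
          by (intro exI[of _ "a-1"] exI[of _ b]) auto
      next
        case False
        show ?thesis
        proof (cases "grw W (a-1) b 1 \<le> grw W a (b-1) 1")
          case True thus ?thesis using False a2 ab unfolding Dp2hlr_def up_right_step_def
            by (intro exI[of _ a] exI[of _ "b-1"]) auto
        next
          case F: False thus ?thesis using False a2 ab unfolding Dp2hlr_def up_right_step_def
            by (intro exI[of _ "a-1"] exI[of _ b]) auto
        qed
      qed
    qed
    then obtain c d where cd: "(c,d) \<in> Dp2hlr n" "c + d < a + b" "up_right_step (c,d) (a,b)"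
       "grw W c d 1 = max (grw W (a-1) b 1) (grw W a (b-1) 1)" by blast
    obtain ps where ps: "ps \<noteq> []" "hd ps = (1,1)" "last ps = (c,d)" "set ps \<subseteq> Dp2hlr n"
      "steps ps" "sum_list (map W ps) = grw W c d 1" using less(1)[OF cd(2) cd(1)] by blast
    show ?thesis
      apply (rule exI[of _ "ps@[(a,b)]"])
      using ps cd less(2) steps_snoc[of ps "(a,b)"] grw_first[OF ab(1,2), of W]
      by (simp add: hd_append)
  qed
qed

lemma L_iff:
  assumes "1 \<le> n"
  shows "Lp2hlr n W \<le> u \<longleftrightarrow> (\<forall>a\<in>{1..n}. grw W a (2*n+1-a) 1 \<le> u)"
proof -
  let ?S = "(\<lambda>ps. sum_list (map W ps)) ` p2hlr_paths n"
  let ?G = "(\<lambda>a. grw W a (2*n+1-a) 1) ` {1..n}"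
  have i: "\<exists>a\<in>{1..n}. s \<le> grw W a (2*n+1-a) 1" if sS: "s \<in> ?S" for s
  proof -
    obtain ps where ps: "ps \<in> p2hlr_paths n" "s = sum_list (map W ps)" using sS by blast
    obtain a b where l: "last ps = (a,b)" by (cases "last ps")
    have "last ps \<in> Dp2hlr n" using ps(1) unfolding p2hlr_paths_def by auto
    hence ab: "1 \<le> a" "a \<le> b" "a + b = 2*n+1" using ps(1) l unfolding Dp2hlr_def p2hlr_paths_def by auto
    have "s \<le> grw W a b 1" using path_le[of ps n W] ps l unfolding p2hlr_paths_def steps_def by auto
    moreover have "a \<le> n" "b = 2*n+1-a" using ab by auto
    ultimately show ?thesis using ab by auto
  qed
  have ii: "grw W a (2*n+1-a) 1 \<in> ?S" if "a \<in> {1..n}" for a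
  proof -
    have "(a, 2*n+1-a) \<in> Dp2hlr n" using that unfolding Dp2hlr_def by auto
    then obtain ps where ps: "ps \<noteq> []" "hd ps = (1,1)" "last ps = (a,2*n+1-a)" "set ps \<subseteq> Dp2hlr n"
      "steps ps" "sum_list (map W ps) = grw W a (2*n+1-a) 1" using path_ex by blast
    have "ps \<in> p2hlr_paths n" using ps that unfolding p2hlr_paths_def steps_def by auto
    thus ?thesis using ps(6) by force
  qed
  have fin: "finite ?S"
  proof (rule finite_subset)
    show "?S \<subseteq> {..Max ?G}"
    proof
      fix s assume "s \<in> ?S"
      then obtain a where a: "a \<in> {1..n}" "s \<le> grw W a (2*n+1-a) 1" using i by blast
      have "grw W a (2*n+1-a) 1 \<le> Max ?G" using a(1) by (intro Max_ge) auto
      thus "s \<in> {..Max ?G}" using a(2) by simp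
    qed
  qed simp
  have ne: "?S \<noteq> {}" using ii[of 1] assms by auto
  have "Lp2hlr n W \<le> u \<longleftrightarrow> (\<forall>s\<in>?S. s \<le> u)" unfolding Lp2hlr_def using Max_le_iff[OF fin ne] by simp
  also have "\<dots> \<longleftrightarrow> (\<forall>a\<in>{1..n}. grw W a (2*n+1-a) 1 \<le> u)"
    using i ii by (meson order_trans)
  finally show ?thesis .
qed


definition cs :: "nat \<Rightarrow> (nat \<times> nat \<Rightarrow> nat) \<Rightarrow> nat \<Rightarrow> nat" where
  "cs n W i = (\<Sum>j\<in>{1..2*n+1-i}. Ws W (i,j))"
definition rs :: "nat \<Rightarrow> (nat \<times> nat \<Rightarrow> nat) \<Rightarrow> nat \<Rightarrow> nat" where
  "rs n W i = (\<Sum>a\<in>{1..i}. Ws W (a,2*n+1-i))"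

lemma D_Sigma: "Dp2hlr n = Sigma {1..n} (\<lambda>i. {i..2*n+1-i})"
  unfolding Dp2hlr_def by auto

lemma finite_D: "finite (Dp2hlr n)"
  unfolding D_Sigma by auto

lemma wt_split:
  fixes x :: "nat \<Rightarrow> 'a::comm_monoid_mult"
  shows "wt n x W = (\<Prod>(i,j)\<in>Dp2hlr n. x i ^ W (i,j)) *
     (\<Prod>(i,j)\<in>Dp2hlr n. if i < j \<and> j \<le> n then x j ^ W (i,j) else 1) *
     (\<Prod>(i,j)\<in>Dp2hlr n. if n < j then x (2*n+1-j) ^ W (i,j) else 1)"
proof -
  have "wt n x W = (\<Prod>p\<in>Dp2hlr n. (case p of (i,j) \<Rightarrow> x i ^ W (i,j)) *
     (case p of (i,j) \<Rightarrow> if i < j \<and> j \<le> n then x j ^ W (i,j) else 1) *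
     (case p of (i,j) \<Rightarrow> if n < j then x (2*n+1-j) ^ W (i,j) else 1))"
    unfolding wt_def
  proof (rule prod.cong[OF refl])
    fix p assume p: "p \<in> Dp2hlr n"
    obtain i j where ij: "p = (i,j)" by (cases p)
    have h: "1 \<le> i" "i \<le> j" "i + j \<le> 2*n+1" using p ij unfolding Dp2hlr_def by auto
    show "(case p of (i, j) \<Rightarrow> if i \<noteq> j then (x i * yvar n x j) ^ W (i, j) else x i ^ W (i, i)) =
       (case p of (i,j) \<Rightarrow> x i ^ W (i,j)) *
     (case p of (i,j) \<Rightarrow> if i < j \<and> j \<le> n then x j ^ W (i,j) else 1) *
     (case p of (i,j) \<Rightarrow> if n < j then x (2*n+1-j) ^ W (i,j) else 1)"
      using h unfolding ij yvar_def by (auto simp: power_mult_distrib)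
  qed
  also have "\<dots> = (\<Prod>(i,j)\<in>Dp2hlr n. x i ^ W (i,j)) *
     (\<Prod>(i,j)\<in>Dp2hlr n. if i < j \<and> j \<le> n then x j ^ W (i,j) else 1) *
     (\<Prod>(i,j)\<in>Dp2hlr n. if n < j then x (2*n+1-j) ^ W (i,j) else 1)"
    by (simp add: prod.distrib)
  finally show ?thesis .
qed

lemma prodA:
  fixes x :: "nat \<Rightarrow> 'a::comm_monoid_mult"
  shows "(\<Prod>(i,j)\<in>Dp2hlr n. x i ^ W (i,j)) = (\<Prod>i\<in>{1..n}. x i ^ (\<Sum>j\<in>{i..2*n+1-i}. W (i,j)))"
  unfolding D_Sigma by (simp add: prod.Sigma[symmetric] power_sum)

lemma prodB:
  fixes x :: "nat \<Rightarrow> 'a::comm_monoid_mult"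
  shows "(\<Prod>(i,j)\<in>Dp2hlr n. if i < j \<and> j \<le> n then x j ^ W (i,j) else 1)
     = (\<Prod>j\<in>{1..n}. x j ^ (\<Sum>i\<in>{1..j-1}. W (i,j)))"
proof -
  let ?D' = "{(i,j). 1 \<le> i \<and> i < j \<and> j \<le> n}"
  have sub: "?D' \<subseteq> Dp2hlr n" unfolding Dp2hlr_def by auto
  have "(\<Prod>(i,j)\<in>Dp2hlr n. if i < j \<and> j \<le> n then x j ^ W (i,j) else 1)
      = (\<Prod>(i,j)\<in>?D'. if i < j \<and> j \<le> n then x j ^ W (i,j) else 1)"
    by (rule prod.mono_neutral_right[OF finite_D sub]) (auto simp: Dp2hlr_def split: if_splits)
  also have "\<dots> = (\<Prod>(i,j)\<in>?D'. x j ^ W (i,j))"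
    by (rule prod.cong) auto
  also have "?D' = (\<lambda>(j,i). (i,j)) ` Sigma {1..n} (\<lambda>j. {1..j-1})" by force
  also have "(\<Prod>(i,j)\<in>\<dots>. x j ^ W (i,j)) = (\<Prod>(j,i)\<in>Sigma {1..n} (\<lambda>j. {1..j-1}). x j ^ W (i,j))"
    by (subst prod.reindex) (auto simp: inj_on_def case_prod_beta)
  also have "\<dots> = (\<Prod>j\<in>{1..n}. x j ^ (\<Sum>i\<in>{1..j-1}. W (i,j)))"
    by (simp add: prod.Sigma[symmetric] power_sum)
  finally show ?thesis .
qed

lemma prodC:
  fixes x :: "nat \<Rightarrow> 'a::comm_monoid_mult"
  shows "(\<Prod>(i,j)\<in>Dp2hlr n. if n < j then x (2*n+1-j) ^ W (i,j) else 1)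
     = (\<Prod>k\<in>{1..n}. x k ^ (\<Sum>i\<in>{1..k}. W (i,2*n+1-k)))"
proof -
  let ?D' = "{(i,j). 1 \<le> i \<and> n < j \<and> i + j \<le> 2*n+1}"
  have sub: "?D' \<subseteq> Dp2hlr n" unfolding Dp2hlr_def by auto
  have "(\<Prod>(i,j)\<in>Dp2hlr n. if n < j then x (2*n+1-j) ^ W (i,j) else 1)
      = (\<Prod>(i,j)\<in>?D'. if n < j then x (2*n+1-j) ^ W (i,j) else 1)"
    by (rule prod.mono_neutral_right[OF finite_D sub]) (auto simp: Dp2hlr_def split: if_splits)
  also have "\<dots> = (\<Prod>(i,j)\<in>?D'. x (2*n+1-j) ^ W (i,j))"
    by (rule prod.cong) auto
  also have "?D' = (\<lambda>(k,i). (i,2*n+1-k)) ` Sigma {1..n} (\<lambda>k. {1..k})"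
  proof
    show "?D' \<subseteq> (\<lambda>(k,i). (i,2*n+1-k)) ` Sigma {1..n} (\<lambda>k. {1..k})"
    proof
      fix p assume "p \<in> ?D'"
      then obtain i j where p: "p = (i,j)" "1 \<le> i" "n < j" "i + j \<le> 2*n+1" by auto
      hence "(2*n+1-j, i) \<in> Sigma {1..n} (\<lambda>k. {1..k})" "p = (i, 2*n+1-(2*n+1-j))" by auto
      thus "p \<in> (\<lambda>(k,i). (i,2*n+1-k)) ` Sigma {1..n} (\<lambda>k. {1..k})" by force
    qed
  qed auto
  also have "(\<Prod>(i,j)\<in>\<dots>. x (2*n+1-j) ^ W (i,j)) = (\<Prod>(k,i)\<in>Sigma {1..n} (\<lambda>k. {1..k}). x k ^ W (i,2*n+1-k))"
    by (subst prod.reindex) (auto simp: inj_on_def case_prod_beta intro!: prod.cong)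
  also have "\<dots> = (\<Prod>k\<in>{1..n}. x k ^ (\<Sum>i\<in>{1..k}. W (i,2*n+1-k)))"
    by (simp add: prod.Sigma[symmetric] power_sum)
  finally show ?thesis .
qed

lemma cs_split: "i \<in> {1..n} \<Longrightarrow> cs n W i = (\<Sum>j\<in>{1..i-1}. W (j,i)) + (\<Sum>j\<in>{i..2*n+1-i}. W (i,j))"
proof -
  assume i: "i \<in> {1..n}"
  have "{1..2*n+1-i} = {1..i-1} \<union> {i..2*n+1-i}" using i by auto
  hence "cs n W i = (\<Sum>j\<in>{1..i-1}. Ws W (i,j)) + (\<Sum>j\<in>{i..2*n+1-i}. Ws W (i,j))"
    unfolding cs_def by (simp add: sum.union_disjoint ivl_disj_int)
  also have "(\<Sum>j\<in>{1..i-1}. Ws W (i,j)) = (\<Sum>j\<in>{1..i-1}. W (j,i))"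
    by (rule sum.cong) (auto simp: Ws_def)
  also have "(\<Sum>j\<in>{i..2*n+1-i}. Ws W (i,j)) = (\<Sum>j\<in>{i..2*n+1-i}. W (i,j))"
    by (rule sum.cong) (auto simp: Ws_def)
  finally show ?thesis .
qed

lemma rs_eq: "i \<in> {1..n} \<Longrightarrow> rs n W i = (\<Sum>a\<in>{1..i}. W (a,2*n+1-i))"
  unfolding rs_def by (rule sum.cong) (auto simp: Ws_def)

lemma wt_cs_rs:
  fixes x :: "nat \<Rightarrow> 'a::comm_monoid_mult"
  shows "wt n x W = (\<Prod>i\<in>{1..n}. x i ^ (cs n W i + rs n W i))"
proof -
  have "wt n x W = (\<Prod>i\<in>{1..n}. x i ^ (\<Sum>j\<in>{i..2*n+1-i}. W (i,j))) *
      (\<Prod>j\<in>{1..n}. x j ^ (\<Sum>i\<in>{1..j-1}. W (i,j))) * (\<Prod>k\<in>{1..n}. x k ^ (\<Sum>i\<in>{1..k}. W (i,2*n+1-k)))"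
    unfolding wt_split prodA prodB prodC ..
  also have "\<dots> = (\<Prod>i\<in>{1..n}. x i ^ ((\<Sum>j\<in>{i..2*n+1-i}. W (i,j)) + (\<Sum>j\<in>{1..i-1}. W (j,i)) + (\<Sum>a\<in>{1..i}. W (a,2*n+1-i))))"
    by (simp add: prod.distrib[symmetric] power_add)
  also have "\<dots> = (\<Prod>i\<in>{1..n}. x i ^ (cs n W i + rs n W i))"
    by (rule prod.cong[OF refl]) (simp add: cs_split rs_eq add_ac)
  finally show ?thesis .
qed


definition EQ :: "nat \<Rightarrow> (nat \<Rightarrow> nat \<Rightarrow> nat) \<Rightarrow> nat \<Rightarrow> int" where
  "EQ n q i = 2 * int (psz n (q (2*i-1))) - int (psz n (q (2*i-2))) - int (psz n (q (2*i)))"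

lemma Phi_even1: "i \<in> {1..n} \<Longrightarrow> Phi n W (2*i-2) = grw W (i-1) (2*n+1-i)"
proof (cases "i = 1")
  case True thus ?thesis unfolding Phi_def by simp
next
  case False
  assume i: "i \<in> {1..n}"
  have "2*i-2 = 2*(i-1)" "2*n - (i-1) = 2*n+1-i" "i - 1 \<le> n" using i False by auto
  thus ?thesis using Phi_even[of "i-1" n W] by simp
qed

lemma SS_row: "1 \<le> i \<Longrightarrow> SS W i b = SS W (i-1) b + (\<Sum>j\<in>{1..b}. Ws W (i,j))"
  unfolding SS_def by (cases i) auto

lemma SS_col: "1 \<le> b \<Longrightarrow> SS W i b = SS W i (b-1) + (\<Sum>a\<in>{1..i}. Ws W (a,b))"
  unfolding SS_def by (cases b) (auto simp: sum.distrib)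

lemma EQ_Phi:
  assumes "1 \<le> n" "i \<in> {1..n}"
  shows "EQ n (Phi n W) i = int (cs n W i + rs n W i)"
proof -
  have a: "psz n (Phi n W (2*i-1)) = SS W i (2*n+1-i)"
    using Phi_odd[of i n W] grw_size[OF assms(1), of i "2*n+1-i" W] assms by simp
  have b: "psz n (Phi n W (2*i-2)) = SS W (i-1) (2*n+1-i)"
    using Phi_even1[OF assms(2), of W] grw_size[OF assms(1), of "i-1" "2*n+1-i" W] assms by simp
  have c: "psz n (Phi n W (2*i)) = SS W i (2*n-i)"
    using Phi_even[of i n W] grw_size[OF assms(1), of i "2*n-i" W] assms by simp
  have r: "SS W i (2*n+1-i) = SS W (i-1) (2*n+1-i) + cs n W i"
    using SS_row[of i W "2*n+1-i"] assms unfolding cs_def by simp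
  have s: "SS W i (2*n+1-i) = SS W i (2*n-i) + rs n W i"
  proof -
    have "1 \<le> 2*n+1-i" "2*n+1-i-1 = 2*n-i" using assms by auto
    thus ?thesis using SS_col[of "2*n+1-i" W i] unfolding rs_def by simp
  qed
  show ?thesis unfolding EQ_def a b c using r s by simp
qed

lemma wt_EQ:
  assumes "1 \<le> n"
  shows "wt n x W = (\<Prod>i\<in>{1..n}. (x i :: 'a::field) powi EQ n (Phi n W) i)"
  unfolding wt_cs_rs
proof (rule prod.cong[OF refl])
  fix i assume i: "i \<in> {1..n}"
  show "x i ^ (cs n W i + rs n W i) = x i powi EQ n (Phi n W) i"
    by (simp only: EQ_Phi[OF assms i] power_int_of_nat)
qed

lemma Wq_fill: "Wq n q \<in> fillings n"
  unfolding fillings_def Wq_def by auto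

lemma LHS_UD:
  assumes "1 \<le> n"
  shows "(\<Sum>W\<in>{W \<in> fillings n. Lp2hlr n W \<le> u}. wt n x W)
       = (\<Sum>q\<in>UD n u. \<Prod>i\<in>{1..n}. (x i :: 'a::field) powi EQ n q i)"
proof -
  have bij: "bij_betw (Wq n) (UD n u) {W \<in> fillings n. Lp2hlr n W \<le> u}"
  proof (rule bij_betw_byWitness[where f' = "Phi n"])
    show "\<forall>q\<in>UD n u. Phi n (Wq n q) = q" using Phi_Wq[OF _ assms] by blast
    show "\<forall>W\<in>{W \<in> fillings n. Lp2hlr n W \<le> u}. Wq n (Phi n W) = W" using Wq_Phi[OF _ assms] by blast
    show "Wq n ` UD n u \<subseteq> {W \<in> fillings n. Lp2hlr n W \<le> u}"
    proof
      fix W assume "W \<in> Wq n ` UD n u"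
      then obtain q where q: "q \<in> UD n u" "W = Wq n q" by blast
      have U: "UDs n q" using q(1) by (rule UD_UDs)
      have "\<forall>a\<in>{1..n}. grw W a (2*n+1-a) 1 \<le> u"
      proof
        fix a assume a: "a \<in> {1..n}"
        have "a \<le> 2*n+1-a" "1 \<le> a" using a by auto
        hence "grw W a (2*n+1-a) = q (2*a-1)"
          using grw_Wq[OF U assms, of a "2*n+1-a"] bgr_top[of a "2*n+1-a" n q] a q(2) by simp
        moreover have "2*a-1 \<in> {1..2*n}" using a by auto
        ultimately show "grw W a (2*n+1-a) 1 \<le> u" using q(1) unfolding UD_def by auto
      qed
      thus "W \<in> {W \<in> fillings n. Lp2hlr n W \<le> u}" using L_iff[OF assms] Wq_fill q(2) by auto
    qed
    show "Phi n ` {W \<in> fillings n. Lp2hlr n W \<le> u} \<subseteq> UD n u"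
    proof
      fix q assume "q \<in> Phi n ` {W \<in> fillings n. Lp2hlr n W \<le> u}"
      then obtain W where W: "W \<in> fillings n" "Lp2hlr n W \<le> u" "q = Phi n W" by blast
      have b: "\<forall>a\<in>{1..n}. grw W a (2*n+1-a) 1 \<le> u" using W L_iff[OF assms] by simp
      have U: "UDs n q" using Phi_UDs[OF assms] W(3) by simp
      have bd: "q k 1 \<le> u" if k: "k \<in> {1..2*n}" for k
      proof (cases "odd k")
        case True
        then obtain m where m: "k = 2*m+1" by (auto elim!: oddE)
        have "q k = grw W (m+1) (2*n+1-(m+1))" using Phi_odd[of "m+1" n W] W(3) m k by simp
        moreover have mn: "m+1 \<in> {1..n}" using m k by auto
        moreover have "grw W (m+1) (2*n+1-(m+1)) 1 \<le> u" using b mn by blast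
        ultimately show ?thesis by simp
      next
        case False
        then obtain a where m: "k = 2*a" by (auto elim!: evenE)
        have a: "a \<in> {1..n}" using k m by auto
        have "q k = grw W a (2*n-a)" using Phi_even[of a n W] W(3) m a by simp
        moreover have "grw W a (2*n-a) 1 \<le> grw W a (2*n+1-a) 1"
        proof -
          have "1 \<le> 2*n+1-a" using a by auto
          thus ?thesis using ilc_first[OF grw_ilc2[of "2*n+1-a" W a]] by simp
        qed
        ultimately show ?thesis using b a by fastforce
      qed
      show "q \<in> UD n u" using U bd W(3) unfolding UD_def UDs_def Phi_def by auto
    qed
  qed
  have "(\<Sum>W\<in>{W \<in> fillings n. Lp2hlr n W \<le> u}. wt n x W) = (\<Sum>q\<in>UD n u. wt n x (Wq n q))"
    using sum.reindex_bij_betw[OF bij, of "wt n x"] by simp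
  also have "\<dots> = (\<Sum>q\<in>UD n u. \<Prod>i\<in>{1..n}. x i powi EQ n q i)"
    by (rule sum.cong[OF refl]) (simp add: wt_EQ[OF assms] Phi_Wq[OF _ assms])
  finally show ?thesis .
qed


definition cmp :: "nat \<Rightarrow> nat \<Rightarrow> (nat \<Rightarrow> nat) \<Rightarrow> (nat \<Rightarrow> nat)" where
  "cmp u i p = (\<lambda>r. if 1 \<le> r \<and> r \<le> i then u - p (i+1-r) else 0)"

definition flp :: "nat \<Rightarrow> nat \<Rightarrow> (nat \<Rightarrow> nat) \<Rightarrow> (nat \<Rightarrow> nat) \<Rightarrow> (nat \<Rightarrow> nat) \<Rightarrow> (nat \<Rightarrow> nat)" where
  "flp u i a b k = (\<lambda>r. if 1 \<le> r \<and> r \<le> i then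
      max (a r) (b r) + (if r = 1 then u else min (a (r-1)) (b (r-1))) - k r else 0)"

lemma ptn_le1: "ptn k p \<Longrightarrow> p r \<le> p 1"
proof (induction r)
  case 0 thus ?case unfolding ptn_def by simp
next
  case (Suc r)
  thus ?case unfolding ptn_def by (cases r) (auto, meson le_trans Suc_le_eq less_Suc_eq_le zero_less_Suc)
qed

lemma ptn_bnd: "ptn k p \<Longrightarrow> p 1 \<le> u \<Longrightarrow> p r \<le> u"
  using ptn_le1 le_trans by blast

lemma ptn_anti_aux: "ptn k p \<Longrightarrow> 1 \<le> r \<Longrightarrow> p (r + d) \<le> p r"
proof (induction d)
  case 0 thus ?case by simp
next
  case (Suc d)
  have "p (Suc (r + d)) \<le> p (r + d)" using Suc.prems unfolding ptn_def by auto
  thus ?case using Suc by simp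
qed

lemma ptn_anti: "ptn k p \<Longrightarrow> 1 \<le> r \<Longrightarrow> r \<le> s \<Longrightarrow> p s \<le> p r"
  using ptn_anti_aux[of k p r "s - r"] by simp

lemma cmp_ptn: "ptn i p \<Longrightarrow> ptn i (cmp u i p) \<and> cmp u i p 1 \<le> u"
  unfolding ptn_def[of i "cmp u i p"]
proof (intro conjI allI impI)
  assume p: "ptn i p"
  fix r :: nat assume r: "1 \<le> r"
  show "cmp u i p (Suc r) \<le> cmp u i p r"
  proof (cases "Suc r \<le> i")
    case True
    have "p (i+1-r) \<le> p (i+1-Suc r)" using ptn_anti[OF p, of "i+1-Suc r" "i+1-r"] True r by simp
    thus ?thesis unfolding cmp_def using True r by auto
  next
    case False thus ?thesis unfolding cmp_def by auto
  qed
qed (auto simp: cmp_def)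

lemma cmp_cmp: "ptn i p \<Longrightarrow> p 1 \<le> u \<Longrightarrow> cmp u i (cmp u i p) = p"
proof
  fix r assume p: "ptn i p" "p 1 \<le> u"
  show "cmp u i (cmp u i p) r = p r"
  proof (cases "1 \<le> r \<and> r \<le> i")
    case True
    have "p r \<le> u" using ptn_bnd[OF p] .
    thus ?thesis using True unfolding cmp_def by auto
  next
    case False
    hence "p r = 0" using p unfolding ptn_def by (cases "r = 0") auto
    thus ?thesis using False unfolding cmp_def by auto
  qed
qed

lemma cmp_0[simp]: "cmp u 0 p = emp"
  unfolding cmp_def emp_def by auto

lemma psz_restrict: "ptn i p \<Longrightarrow> i \<le> n \<Longrightarrow> psz n p = (\<Sum>r\<in>{1..i}. p r)"
  unfolding psz_def
  by (rule sum.mono_neutral_right) (auto simp: ptn_def)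

lemma sum_rev_ivl: "(\<Sum>r\<in>{1..i::nat}. f (i+1-r)) = (\<Sum>r\<in>{1..i}. (f r :: nat))"
  apply (rule sum.reindex_bij_witness[where i = "\<lambda>r. i+1-r" and j = "\<lambda>r. i+1-r"])
  apply auto
  done

lemma cmp_size:
  assumes "ptn i p" "p 1 \<le> u" "i \<le> n"
  shows "int (psz n (cmp u i p)) = int i * int u - int (psz n p)"
proof -
  have c: "ptn i (cmp u i p)" using cmp_ptn[OF assms(1)] by simp
  have "int (psz n (cmp u i p)) = (\<Sum>r\<in>{1..i}. int (u - p (i+1-r)))"
    unfolding psz_restrict[OF c assms(3)] by (simp add: cmp_def)
  also have "\<dots> = (\<Sum>r\<in>{1..i}. int u - int (p (i+1-r)))"
    by (rule sum.cong) (use ptn_bnd[OF assms(1,2)] in auto)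
  also have "\<dots> = int i * int u - (\<Sum>r\<in>{1..i}. int (p (i+1-r)))"
    by (simp add: sum_subtractf)
  also have "(\<Sum>r\<in>{1..i}. int (p (i+1-r))) = int (\<Sum>r\<in>{1..i}. p (i+1-r))" by simp
  also have "\<dots> = int (psz n p)" unfolding sum_rev_ivl psz_restrict[OF assms(1,3)] ..
  finally show ?thesis .
qed

lemma nat_sub_le_iff: "(a::nat) \<le> u \<Longrightarrow> b \<le> u \<Longrightarrow> (u - a \<le> u - b \<longleftrightarrow> b \<le> a)"
  by arith

lemma ilc_step_char:
  assumes "ptn (i-1) t" "ptn i k"
  shows "ilc t k \<longleftrightarrow> (\<forall>s. 1 \<le> s \<and> s \<le> i-1 \<longrightarrow> k (s+1) \<le> t s \<and> t s \<le> k s)"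
proof
  assume "ilc t k" thus "\<forall>s. 1 \<le> s \<and> s \<le> i-1 \<longrightarrow> k (s+1) \<le> t s \<and> t s \<le> k s"
    unfolding ilc_def by auto
next
  assume h: "\<forall>s. 1 \<le> s \<and> s \<le> i-1 \<longrightarrow> k (s+1) \<le> t s \<and> t s \<le> k s"
  show "ilc t k" unfolding ilc_def
  proof (intro allI impI)
    fix r :: nat assume r: "1 \<le> r"
    show "t r \<le> k r \<and> k (Suc r) \<le> t r"
    proof (cases "r \<le> i-1")
      case True thus ?thesis using h r by auto
    next
      case False
      hence "t r = 0" "k (Suc r) = 0" using assms r unfolding ptn_def by auto
      thus ?thesis by simp
    qed
  qed
qed

lemma ilc_same_char:
  assumes "ptn i t" "ptn i k"
  shows "ilc t k \<longleftrightarrow> (\<forall>s. 1 \<le> s \<and> s \<le> i \<longrightarrow> t s \<le> k s) \<and> (\<forall>s. 1 \<le> s \<and> s \<le> i-1 \<longrightarrow> k (s+1) \<le> t s)"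
proof
  assume "ilc t k" thus "(\<forall>s. 1 \<le> s \<and> s \<le> i \<longrightarrow> t s \<le> k s) \<and> (\<forall>s. 1 \<le> s \<and> s \<le> i-1 \<longrightarrow> k (s+1) \<le> t s)"
    unfolding ilc_def by auto
next
  assume h: "(\<forall>s. 1 \<le> s \<and> s \<le> i \<longrightarrow> t s \<le> k s) \<and> (\<forall>s. 1 \<le> s \<and> s \<le> i-1 \<longrightarrow> k (s+1) \<le> t s)"
  show "ilc t k" unfolding ilc_def
  proof (intro allI impI conjI)
    fix r :: nat assume r: "1 \<le> r"
    show "t r \<le> k r"
    proof (cases "r \<le> i")
      case True thus ?thesis using h r by auto
    next
      case False thus ?thesis using assms unfolding ptn_def by auto
    qed
    show "k (Suc r) \<le> t r"
    proof (cases "r \<le> i-1")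
      case True thus ?thesis using h r by auto
    next
      case False thus ?thesis using assms unfolding ptn_def by auto
    qed
  qed
qed

lemma ilc_cmp_step:
  assumes "ptn (i-1) t" "ptn i k" "t 1 \<le> u" "k 1 \<le> u" "1 \<le> i"
  shows "ilc t k \<longleftrightarrow> ilc (cmp u (i-1) t) (cmp u i k)"
proof -
  have c1: "ptn (i-1) (cmp u (i-1) t)" "ptn i (cmp u i k)" using cmp_ptn assms(1,2) by blast+
  have bt: "\<And>r. t r \<le> u" and bk: "\<And>r. k r \<le> u" using ptn_bnd assms by blast+
  have "ilc (cmp u (i-1) t) (cmp u i k) \<longleftrightarrow>
      (\<forall>r. 1 \<le> r \<and> r \<le> i-1 \<longrightarrow> cmp u i k (r+1) \<le> cmp u (i-1) t r \<and> cmp u (i-1) t r \<le> cmp u i k r)"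
    by (rule ilc_step_char[OF c1])
  also have "\<dots> \<longleftrightarrow> (\<forall>r. 1 \<le> r \<and> r \<le> i-1 \<longrightarrow> t (i-r) \<le> k (i-r) \<and> k (i+1-r) \<le> t (i-r))"
  proof -
    have "cmp u i k (r+1) \<le> cmp u (i-1) t r \<and> cmp u (i-1) t r \<le> cmp u i k r \<longleftrightarrow>
          t (i-r) \<le> k (i-r) \<and> k (i+1-r) \<le> t (i-r)" if r: "1 \<le> r" "r \<le> i-1" for r
    proof -
      have e: "cmp u i k (r+1) = u - k (i-r)" "cmp u (i-1) t r = u - t (i-r)" "cmp u i k r = u - k (i+1-r)"
        using r unfolding cmp_def by auto
      show ?thesis unfolding e using bt[of "i-r"] bk[of "i-r"] bk[of "i+1-r"] by (simp add: nat_sub_le_iff)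
    qed
    thus ?thesis by blast
  qed
  also have "\<dots> \<longleftrightarrow> (\<forall>s. 1 \<le> s \<and> s \<le> i-1 \<longrightarrow> k (s+1) \<le> t s \<and> t s \<le> k s)"
  proof
    assume h: "\<forall>r. 1 \<le> r \<and> r \<le> i-1 \<longrightarrow> t (i-r) \<le> k (i-r) \<and> k (i+1-r) \<le> t (i-r)"
    show "\<forall>s. 1 \<le> s \<and> s \<le> i-1 \<longrightarrow> k (s+1) \<le> t s \<and> t s \<le> k s"
    proof (intro allI impI)
      fix s assume s: "1 \<le> s \<and> s \<le> i-1"
      have "i - (i - s) = s" "i + 1 - (i-s) = s + 1" "1 \<le> i - s \<and> i - s \<le> i - 1" using s by auto
      thus "k (s+1) \<le> t s \<and> t s \<le> k s" using h[rule_format, of "i-s"] by auto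
    qed
  next
    assume h: "\<forall>s. 1 \<le> s \<and> s \<le> i-1 \<longrightarrow> k (s+1) \<le> t s \<and> t s \<le> k s"
    show "\<forall>r. 1 \<le> r \<and> r \<le> i-1 \<longrightarrow> t (i-r) \<le> k (i-r) \<and> k (i+1-r) \<le> t (i-r)"
    proof (intro allI impI)
      fix r assume r: "1 \<le> r \<and> r \<le> i-1"
      have "i + 1 - r = (i - r) + 1" "1 \<le> i - r \<and> i - r \<le> i - 1" using r by auto
      thus "t (i-r) \<le> k (i-r) \<and> k (i+1-r) \<le> t (i-r)" using h[rule_format, of "i-r"] by auto
    qed
  qed
  also have "\<dots> \<longleftrightarrow> ilc t k" by (rule ilc_step_char[OF assms(1,2), symmetric])
  finally show ?thesis by simp
qed

lemma ilc_cmp_same: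
  assumes "ptn i t" "ptn i k" "t 1 \<le> u" "k 1 \<le> u"
  shows "ilc t k \<longleftrightarrow> ilc (cmp u i k) (cmp u i t)"
proof -
  have c1: "ptn i (cmp u i k)" "ptn i (cmp u i t)" using cmp_ptn assms(1,2) by blast+
  have bt: "\<And>r. t r \<le> u" and bk: "\<And>r. k r \<le> u" using ptn_bnd assms by blast+
  have "ilc (cmp u i k) (cmp u i t) \<longleftrightarrow>
     (\<forall>s. 1 \<le> s \<and> s \<le> i \<longrightarrow> cmp u i k s \<le> cmp u i t s) \<and> (\<forall>s. 1 \<le> s \<and> s \<le> i-1 \<longrightarrow> cmp u i t (s+1) \<le> cmp u i k s)"
    by (rule ilc_same_char[OF c1])
  also have "\<dots> \<longleftrightarrow> (\<forall>s. 1 \<le> s \<and> s \<le> i \<longrightarrow> t (i+1-s) \<le> k (i+1-s)) \<and> (\<forall>s. 1 \<le> s \<and> s \<le> i-1 \<longrightarrow> k (i+1-s) \<le> t (i-s))"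
  proof -
    have A: "cmp u i k s \<le> cmp u i t s \<longleftrightarrow> t (i+1-s) \<le> k (i+1-s)" if "1 \<le> s" "s \<le> i" for s
      using that bt[of "i+1-s"] bk[of "i+1-s"] unfolding cmp_def by auto
    have B: "cmp u i t (s+1) \<le> cmp u i k s \<longleftrightarrow> k (i+1-s) \<le> t (i-s)" if "1 \<le> s" "s \<le> i-1" for s
    proof -
      have "cmp u i t (s+1) = u - t (i-s)" "cmp u i k s = u - k (i+1-s)" using that unfolding cmp_def by auto
      thus ?thesis using bt[of "i-s"] bk[of "i+1-s"] by (simp add: nat_sub_le_iff)
    qed
    show ?thesis using A B by (meson le_trans)
  qed
  also have "\<dots> \<longleftrightarrow> (\<forall>s. 1 \<le> s \<and> s \<le> i \<longrightarrow> t s \<le> k s) \<and> (\<forall>s. 1 \<le> s \<and> s \<le> i-1 \<longrightarrow> k (s+1) \<le> t s)"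
  proof
    assume h: "(\<forall>s. 1 \<le> s \<and> s \<le> i \<longrightarrow> t (i+1-s) \<le> k (i+1-s)) \<and> (\<forall>s. 1 \<le> s \<and> s \<le> i-1 \<longrightarrow> k (i+1-s) \<le> t (i-s))"
    show "(\<forall>s. 1 \<le> s \<and> s \<le> i \<longrightarrow> t s \<le> k s) \<and> (\<forall>s. 1 \<le> s \<and> s \<le> i-1 \<longrightarrow> k (s+1) \<le> t s)"
    proof (intro conjI allI impI)
      fix s assume s: "1 \<le> s \<and> s \<le> i"
      have "i + 1 - (i+1-s) = s" "1 \<le> i+1-s \<and> i+1-s \<le> i" using s by auto
      thus "t s \<le> k s" using h[THEN conjunct1, rule_format, of "i+1-s"] by auto
    next
      fix s assume s: "1 \<le> s \<and> s \<le> i-1"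
      have "i + 1 - (i-s) = s+1" "i - (i-s) = s" "1 \<le> i - s \<and> i - s \<le> i - 1" using s by auto
      thus "k (s+1) \<le> t s" using h[THEN conjunct2, rule_format, of "i-s"] by auto
    qed
  next
    assume h: "(\<forall>s. 1 \<le> s \<and> s \<le> i \<longrightarrow> t s \<le> k s) \<and> (\<forall>s. 1 \<le> s \<and> s \<le> i-1 \<longrightarrow> k (s+1) \<le> t s)"
    show "(\<forall>s. 1 \<le> s \<and> s \<le> i \<longrightarrow> t (i+1-s) \<le> k (i+1-s)) \<and> (\<forall>s. 1 \<le> s \<and> s \<le> i-1 \<longrightarrow> k (i+1-s) \<le> t (i-s))"
    proof (intro conjI allI impI)
      fix s assume s: "1 \<le> s \<and> s \<le> i"
      hence "1 \<le> i+1-s \<and> i+1-s \<le> i" by auto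
      thus "t (i+1-s) \<le> k (i+1-s)" using h[THEN conjunct1, rule_format, of "i+1-s"] by auto
    next
      fix s assume s: "1 \<le> s \<and> s \<le> i-1"
      have "i + 1 - s = (i-s)+1" "1 \<le> i - s \<and> i - s \<le> i - 1" using s by auto
      thus "k (i+1-s) \<le> t (i-s)" using h[THEN conjunct2, rule_format, of "i-s"] s by auto
    qed
  qed
  also have "\<dots> \<longleftrightarrow> ilc t k" by (rule ilc_same_char[OF assms(1,2), symmetric])
  finally show ?thesis by simp
qed

definition lo :: "(nat \<Rightarrow> nat) \<Rightarrow> (nat \<Rightarrow> nat) \<Rightarrow> nat \<Rightarrow> nat" where
  "lo a b r = max (a r) (b r)"
definition hi :: "nat \<Rightarrow> (nat \<Rightarrow> nat) \<Rightarrow> (nat \<Rightarrow> nat) \<Rightarrow> nat \<Rightarrow> nat" where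
  "hi u a b r = (if r = 1 then u else min (a (r-1)) (b (r-1)))"

lemma flp_alt: "flp u i a b k = (\<lambda>r. if 1 \<le> r \<and> r \<le> i then lo a b r + hi u a b r - k r else 0)"
  unfolding flp_def lo_def hi_def by simp

lemma lohi_sum: "1 \<le> i \<Longrightarrow> (\<Sum>r\<in>{1..i}. int (lo a b r + hi u a b r)) =
   int u + (\<Sum>r\<in>{1..i}. int (a r + b r)) - int (min (a i) (b i))"
proof (induction i rule: dec_induct)
  case base show ?case unfolding lo_def hi_def by (simp add: max_def min_def)
next
  case (step i)
  have "lo a b (Suc i) + hi u a b (Suc i) = max (a (Suc i)) (b (Suc i)) + min (a i) (b i)"
    unfolding lo_def hi_def using step(1) by simp
  hence e: "int (lo a b (Suc i) + hi u a b (Suc i)) = int (a (Suc i)) + int (b (Suc i)) - int (min (a (Suc i)) (b (Suc i))) + int (min (a i) (b i))"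
    by (simp add: max_def min_def)
  have "(\<Sum>r\<in>{1..Suc i}. int (lo a b r + hi u a b r)) = (\<Sum>r\<in>{1..i}. int (lo a b r + hi u a b r)) + int (lo a b (Suc i) + hi u a b (Suc i))"
    using step(1) by simp
  also have "\<dots> = int u + (\<Sum>r\<in>{1..i}. int (a r + b r)) - int (min (a i) (b i)) + int (lo a b (Suc i) + hi u a b (Suc i))"
    using step(3) by simp
  also have "\<dots> = int u + (\<Sum>r\<in>{1..Suc i}. int (a r + b r)) - int (min (a (Suc i)) (b (Suc i)))"
    unfolding e using step(1) by simp
  finally show ?case .
qed

locale flipctx =
  fixes u i :: nat and a b k :: "nat \<Rightarrow> nat"
  assumes i1: "1 \<le> i" and pa: "ptn (i-1) a" and pb: "ptn i b" and pk: "ptn i k"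
    and ia: "ilc a k" and ib: "ilc b k" and ku: "k 1 \<le> u"
begin

lemma bounds: "1 \<le> r \<Longrightarrow> r \<le> i \<Longrightarrow> lo a b r \<le> k r \<and> k r \<le> hi u a b r"
proof -
  assume r: "1 \<le> r" "r \<le> i"
  have "a r \<le> k r" "b r \<le> k r" using ia ib r unfolding ilc_def by auto
  moreover have "k r \<le> hi u a b r"
  proof (cases "r = 1")
    case True thus ?thesis using ku unfolding hi_def by simp
  next
    case False
    then obtain s where s: "r = Suc s" "1 \<le> s" using r by (cases r) auto
    have "k (Suc s) \<le> a s" "k (Suc s) \<le> b s" using ia ib s unfolding ilc_def by auto
    thus ?thesis using s unfolding hi_def by simp
  qed
  ultimately show ?thesis unfolding lo_def by simp
qed

definition k' where "k' = flp u i a b k"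

lemma k'_bounds: "1 \<le> r \<Longrightarrow> r \<le> i \<Longrightarrow> lo a b r \<le> k' r \<and> k' r \<le> hi u a b r"
  using bounds unfolding k'_def flp_alt by fastforce

lemma k'_zero: "r = 0 \<or> i < r \<Longrightarrow> k' r = 0"
  unfolding k'_def flp_alt by auto

lemma a_zero: "i \<le> r \<Longrightarrow> a r = 0"
  using pa i1 unfolding ptn_def by auto

lemma b_zero: "i < r \<Longrightarrow> b r = 0"
  using pb unfolding ptn_def by auto

lemma k'_ilc_a: "ilc a k'"
  unfolding ilc_def
proof (intro allI impI conjI)
  fix r :: nat assume r: "1 \<le> r"
  show "a r \<le> k' r"
  proof (cases "r \<le> i")
    case True thus ?thesis using k'_bounds[OF r True] unfolding lo_def by simp
  next
    case False thus ?thesis using a_zero by simp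
  qed
  show "k' (Suc r) \<le> a r"
  proof (cases "Suc r \<le> i")
    case True thus ?thesis using k'_bounds[of "Suc r"] r unfolding hi_def by simp
  next
    case False thus ?thesis using k'_zero by simp
  qed
qed

lemma k'_ilc_b: "ilc b k'"
  unfolding ilc_def
proof (intro allI impI conjI)
  fix r :: nat assume r: "1 \<le> r"
  show "b r \<le> k' r"
  proof (cases "r \<le> i")
    case True thus ?thesis using k'_bounds[OF r True] unfolding lo_def by simp
  next
    case False thus ?thesis using b_zero by simp
  qed
  show "k' (Suc r) \<le> b r"
  proof (cases "Suc r \<le> i")
    case True thus ?thesis using k'_bounds[of "Suc r"] r unfolding hi_def by simp
  next
    case False thus ?thesis using k'_zero by simp
  qed
qed

lemma k'_ptn: "ptn i k'"
  by (rule ilc_ptn[OF k'_ilc_a pa]) (use k'_zero in auto)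

lemma k'_u: "k' 1 \<le> u"
  using k'_bounds[of 1] i1 unfolding hi_def by simp

lemma flp_flp: "flp u i a b k' = k"
proof
  fix r show "flp u i a b k' r = k r"
  proof (cases "1 \<le> r \<and> r \<le> i")
    case True
    have "lo a b r \<le> k r \<and> k r \<le> hi u a b r" using bounds True by simp
    thus ?thesis using True unfolding flp_alt k'_def by auto
  next
    case False
    hence "k r = 0" using pk unfolding ptn_def by (cases "r = 0") auto
    thus ?thesis using False unfolding flp_alt by auto
  qed
qed

lemma k'_size:
  assumes "i \<le> n"
  shows "int (psz n k') = int u + int (psz n a) + int (psz n b) - int (psz n k)"
proof -
  have pa': "ptn i a" using ptn_mono[OF pa] by simp
  have "int (psz n k') = (\<Sum>r\<in>{1..i}. int (k' r))" using psz_restrict[OF k'_ptn assms] by simp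
  also have "\<dots> = (\<Sum>r\<in>{1..i}. int (lo a b r + hi u a b r) - int (k r))"
  proof (rule sum.cong[OF refl])
    fix r assume r: "r \<in> {1..i}"
    have "k r \<le> lo a b r + hi u a b r" using bounds[of r] r by auto
    thus "int (k' r) = int (lo a b r + hi u a b r) - int (k r)" using r by (simp add: k'_def flp_alt of_nat_diff)
  qed
  also have "\<dots> = int u + (\<Sum>r\<in>{1..i}. int (a r + b r)) - int (min (a i) (b i)) - (\<Sum>r\<in>{1..i}. int (k r))"
    using lohi_sum[OF i1, of a b u] by (simp add: sum_subtractf)
  also have "min (a i) (b i) = 0" using a_zero by simp
  also have "(\<Sum>r\<in>{1..i}. int (a r + b r)) = int (psz n a) + int (psz n b)"
    using psz_restrict[OF pa' assms] psz_restrict[OF pb assms] by (simp add: sum.distrib)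
  also have "(\<Sum>r\<in>{1..i}. int (k r)) = int (psz n k)"
    using psz_restrict[OF pk assms] by simp
  finally show ?thesis by simp
qed

end


lemma emp_apply[simp]: "emp r = 0" by (simp add: emp_def)

definition UU :: "nat \<Rightarrow> nat \<Rightarrow> (nat \<Rightarrow> nat \<Rightarrow> nat) set" where
  "UU n u = {s. (\<forall>k. (k = 0 \<or> 2*n < k) \<longrightarrow> s k = emp) \<and>
     (\<forall>k\<in>{1..2*n}. ptn ((k+1) div 2) (s k) \<and> s k 1 \<le> u) \<and>
     (\<forall>k\<in>{1..2*n}. ilc (s (k-1)) (s k))}"

definition Psi :: "nat \<Rightarrow> nat \<Rightarrow> (nat \<Rightarrow> nat \<Rightarrow> nat) \<Rightarrow> (nat \<Rightarrow> nat \<Rightarrow> nat)" where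
  "Psi n u q = (\<lambda>k. if k = 0 \<or> 2*n < k then emp else if even k then cmp u (k div 2) (q k)
     else cmp u ((k+1) div 2) (flp u ((k+1) div 2) (q (k-1)) (q (k+1)) (q k)))"

definition Psi' :: "nat \<Rightarrow> nat \<Rightarrow> (nat \<Rightarrow> nat \<Rightarrow> nat) \<Rightarrow> (nat \<Rightarrow> nat \<Rightarrow> nat)" where
  "Psi' n u s = (\<lambda>k. if k = 0 \<or> 2*n < k then emp else if even k then cmp u (k div 2) (s k)
     else flp u ((k+1) div 2) (cmp u ((k-1) div 2) (s (k-1))) (cmp u ((k+1) div 2) (s (k+1))) (cmp u ((k+1) div 2) (s k)))"

lemma k_cases:
  fixes k :: nat
  assumes "k \<in> {1..2*n}"
  obtains i where "i \<in> {1..n}" "k = 2*i" | i where "i \<in> {1..n}" "k = 2*i-1"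
proof (cases "even k")
  case True
  then obtain i where "k = 2*i" by (auto elim!: evenE)
  thus ?thesis using that assms by auto
next
  case False
  then obtain m where "k = 2*m+1" by (auto elim!: oddE)
  hence "m+1 \<in> {1..n}" "k = 2*(m+1)-1" using assms by auto
  thus ?thesis using that by blast
qed

lemma Psi_even: "i \<le> n \<Longrightarrow> Psi n u q (2*i) = cmp u i (q (2*i))"
  unfolding Psi_def by auto
lemma Psi_odd: "i \<in> {1..n} \<Longrightarrow> Psi n u q (2*i-1) = cmp u i (flp u i (q (2*i-2)) (q (2*i)) (q (2*i-1)))"
proof -
  assume i: "i \<in> {1..n}"
  have "odd (2*i-1)" "(2*i-1+1) div 2 = i" "2*i-1-1 = 2*i-2" "2*i-1+1 = 2*i" using i by auto
  thus ?thesis unfolding Psi_def using i by auto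
qed
lemma Psi'_even: "i \<le> n \<Longrightarrow> Psi' n u s (2*i) = cmp u i (s (2*i))"
  unfolding Psi'_def by auto
lemma Psi'_odd: "i \<in> {1..n} \<Longrightarrow> Psi' n u s (2*i-1) =
   flp u i (cmp u (i-1) (s (2*i-2))) (cmp u i (s (2*i))) (cmp u i (s (2*i-1)))"
proof -
  assume i: "i \<in> {1..n}"
  have "odd (2*i-1)" "(2*i-1+1) div 2 = i" "2*i-1-1 = 2*i-2" "2*i-1+1 = 2*i" "(2*i-1-1) div 2 = i-1" using i by auto
  thus ?thesis unfolding Psi'_def using i by auto
qed

lemma UD_even: "q \<in> UD n u \<Longrightarrow> i \<le> n \<Longrightarrow> ptn i (q (2*i)) \<and> q (2*i) 1 \<le> u"
proof -
  assume q: "q \<in> UD n u" and i: "i \<le> n"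
  show ?thesis
  proof (cases "i = 0")
    case True
    have "q 0 = emp" using q unfolding UD_def by auto
    thus ?thesis using True by simp
  next
    case False
    hence "2*i \<in> {1..2*n}" using i by auto
    hence "ptn ((2*i+1) div 2) (q (2*i)) \<and> q (2*i) 1 \<le> u" using q unfolding UD_def by blast
    thus ?thesis by simp
  qed
qed

lemma UD_odd: "q \<in> UD n u \<Longrightarrow> i \<in> {1..n} \<Longrightarrow> ptn i (q (2*i-1)) \<and> q (2*i-1) 1 \<le> u"
proof -
  assume q: "q \<in> UD n u" and i: "i \<in> {1..n}"
  hence "2*i-1 \<in> {1..2*n}" by auto
  hence "ptn ((2*i-1+1) div 2) (q (2*i-1)) \<and> q (2*i-1) 1 \<le> u" using q unfolding UD_def by blast
  moreover have "(2*i-1+1) div 2 = i" using i by auto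
  ultimately show ?thesis by simp
qed

lemma UD_fc: "q \<in> UD n u \<Longrightarrow> i \<in> {1..n} \<Longrightarrow> flipctx u i (q (2*i-2)) (q (2*i)) (q (2*i-1))"
proof -
  assume q: "q \<in> UD n u" and i: "i \<in> {1..n}"
  have "i - 1 \<le> n" using i by auto
  hence a: "ptn (i-1) (q (2*(i-1)))" using UD_even[OF q, of "i-1"] by simp
  have e: "2*(i-1) = 2*i-2" by simp
  show ?thesis
    apply unfold_locales
    using i a[unfolded e] UD_even[OF q, of i] UD_odd[OF q i] q unfolding UD_def by auto
qed

lemma UU_even: "s \<in> UU n u \<Longrightarrow> i \<le> n \<Longrightarrow> ptn i (s (2*i)) \<and> s (2*i) 1 \<le> u"
proof -
  assume q: "s \<in> UU n u" and i: "i \<le> n"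
  show ?thesis
  proof (cases "i = 0")
    case True
    have "s 0 = emp" using q unfolding UU_def by auto
    thus ?thesis using True by simp
  next
    case False
    hence "2*i \<in> {1..2*n}" using i by auto
    hence "ptn ((2*i+1) div 2) (s (2*i)) \<and> s (2*i) 1 \<le> u" using q unfolding UU_def by blast
    thus ?thesis by simp
  qed
qed

lemma UU_odd: "s \<in> UU n u \<Longrightarrow> i \<in> {1..n} \<Longrightarrow> ptn i (s (2*i-1)) \<and> s (2*i-1) 1 \<le> u"
proof -
  assume q: "s \<in> UU n u" and i: "i \<in> {1..n}"
  hence "2*i-1 \<in> {1..2*n}" by auto
  hence "ptn ((2*i-1+1) div 2) (s (2*i-1)) \<and> s (2*i-1) 1 \<le> u" using q unfolding UU_def by blast
  moreover have "(2*i-1+1) div 2 = i" using i by auto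
  ultimately show ?thesis by simp
qed

lemma UU_ilc: "s \<in> UU n u \<Longrightarrow> i \<in> {1..n} \<Longrightarrow> ilc (s (2*i-2)) (s (2*i-1)) \<and> ilc (s (2*i-1)) (s (2*i))"
proof -
  assume q: "s \<in> UU n u" and i: "i \<in> {1..n}"
  have "2*i-1 \<in> {1..2*n}" "2*i \<in> {1..2*n}" using i by auto
  hence "ilc (s (2*i-1-1)) (s (2*i-1))" "ilc (s (2*i-1)) (s (2*i))" using q unfolding UU_def
    by blast+
  moreover have "2*i-1-1 = 2*i-2" by simp
  ultimately show ?thesis by simp
qed

lemma UU_fc: "s \<in> UU n u \<Longrightarrow> i \<in> {1..n} \<Longrightarrow>
   flipctx u i (cmp u (i-1) (s (2*i-2))) (cmp u i (s (2*i))) (cmp u i (s (2*i-1)))"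
proof -
  assume q: "s \<in> UU n u" and i: "i \<in> {1..n}"
  have "i - 1 \<le> n" using i by auto
  hence a: "ptn (i-1) (s (2*(i-1))) \<and> s (2*(i-1)) 1 \<le> u" using UU_even[OF q, of "i-1"] by simp
  have e: "2*(i-1) = 2*i-2" by simp
  have a': "ptn (i-1) (s (2*i-2))" "s (2*i-2) 1 \<le> u" using a unfolding e by auto
  have b: "ptn i (s (2*i))" "s (2*i) 1 \<le> u" using UU_even[OF q, of i] i by auto
  have k: "ptn i (s (2*i-1))" "s (2*i-1) 1 \<le> u" using UU_odd[OF q i] by auto
  have il: "ilc (s (2*i-2)) (s (2*i-1))" "ilc (s (2*i-1)) (s (2*i))" using UU_ilc[OF q i] by auto
  have i1: "1 \<le> i" using i by simp
  show ?thesis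
  proof
    show "1 \<le> i" by (rule i1)
    show "ptn (i-1) (cmp u (i-1) (s (2*i-2)))" using cmp_ptn[OF a'(1)] by simp
    show "ptn i (cmp u i (s (2*i)))" using cmp_ptn[OF b(1)] by simp
    show "ptn i (cmp u i (s (2*i-1)))" using cmp_ptn[OF k(1)] by simp
    show "ilc (cmp u (i-1) (s (2*i-2))) (cmp u i (s (2*i-1)))"
      using ilc_cmp_step[OF a'(1) k(1) a'(2) k(2) i1] il by simp
    show "ilc (cmp u i (s (2*i))) (cmp u i (s (2*i-1)))"
      using ilc_cmp_same[OF k(1) b(1) k(2) b(2)] il by simp
    show "cmp u i (s (2*i-1)) 1 \<le> u" using cmp_ptn[OF k(1)] by simp
  qed
qed

lemma Psi_UU:
  assumes q: "q \<in> UD n u"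
  shows "Psi n u q \<in> UU n u"
proof -
  have ev: "ptn i (Psi n u q (2*i)) \<and> Psi n u q (2*i) 1 \<le> u" if i: "i \<le> n" for i
    using cmp_ptn[of i "q (2*i)" u] UD_even[OF q i] Psi_even[OF i] by simp
  have od: "ptn i (Psi n u q (2*i-1)) \<and> Psi n u q (2*i-1) 1 \<le> u
      \<and> ilc (Psi n u q (2*i-2)) (Psi n u q (2*i-1)) \<and> ilc (Psi n u q (2*i-1)) (Psi n u q (2*i))"
    if i: "i \<in> {1..n}" for i
  proof -
    interpret F: flipctx u i "q (2*i-2)" "q (2*i)" "q (2*i-1)" by (rule UD_fc[OF q i])
    have P: "Psi n u q (2*i-1) = cmp u i F.k'" using Psi_odd[OF i] unfolding F.k'_def by simp
    have "i - 1 \<le> n" using i by auto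
    hence P0: "Psi n u q (2*i-2) = cmp u (i-1) (q (2*i-2))" using Psi_even[of "i-1" n u q] by (simp add: mult.commute right_diff_distrib')
    have P2: "Psi n u q (2*i) = cmp u i (q (2*i))" using Psi_even[of i n u q] i by simp
    have a: "ptn (i-1) (q (2*i-2))" "q (2*i-2) 1 \<le> u"
      using UD_even[OF q \<open>i-1 \<le> n\<close>] by (simp_all add: right_diff_distrib')
    have b: "ptn i (q (2*i))" "q (2*i) 1 \<le> u" using UD_even[OF q, of i] i by auto
    have c1: "ilc (cmp u (i-1) (q (2*i-2))) (cmp u i F.k')"
      using ilc_cmp_step[OF a(1) F.k'_ptn a(2) F.k'_u F.i1] F.k'_ilc_a by simp
    have c2: "ilc (cmp u i F.k') (cmp u i (q (2*i)))"
      using ilc_cmp_same[OF b(1) F.k'_ptn b(2) F.k'_u] F.k'_ilc_b by simp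
    show ?thesis unfolding P P0 P2 using c1 c2 cmp_ptn[OF F.k'_ptn, of u] by simp
  qed
  have A: "\<forall>k. (k = 0 \<or> 2*n < k) \<longrightarrow> Psi n u q k = emp" unfolding Psi_def by auto
  have B: "ptn ((k+1) div 2) (Psi n u q k) \<and> Psi n u q k 1 \<le> u" if k: "k \<in> {1..2*n}" for k
  proof (cases rule: k_cases[OF k])
    case (1 i) thus ?thesis using ev[of i] by simp
  next
    case (2 i)
    have "(2*i-1+1) div 2 = i" using 2 by auto
    thus ?thesis using od[OF 2(1)] 2 by simp
  qed
  have C: "ilc (Psi n u q (k-1)) (Psi n u q k)" if k: "k \<in> {1..2*n}" for k
  proof (cases rule: k_cases[OF k])
    case (1 i) 
    thus ?thesis using od[OF 1(1)] 1 by simp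
  next
    case (2 i)
    have "2*i-1-1 = 2*i-2" by simp
    thus ?thesis using od[OF 2(1)] 2 by simp
  qed
  show ?thesis unfolding UU_def using A B C by blast
qed

lemma Psi'_UD:
  assumes q: "s \<in> UU n u"
  shows "Psi' n u s \<in> UD n u"
proof -
  have ev: "ptn i (Psi' n u s (2*i)) \<and> Psi' n u s (2*i) 1 \<le> u" if i: "i \<le> n" for i
    using cmp_ptn[of i "s (2*i)" u] UU_even[OF q i] Psi'_even[OF i] by simp
  have od: "ptn i (Psi' n u s (2*i-1)) \<and> Psi' n u s (2*i-1) 1 \<le> u
      \<and> ilc (Psi' n u s (2*i-2)) (Psi' n u s (2*i-1)) \<and> ilc (Psi' n u s (2*i)) (Psi' n u s (2*i-1))"
    if i: "i \<in> {1..n}" for i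
  proof -
    interpret F: flipctx u i "cmp u (i-1) (s (2*i-2))" "cmp u i (s (2*i))" "cmp u i (s (2*i-1))"
      by (rule UU_fc[OF q i])
    have P: "Psi' n u s (2*i-1) = F.k'" using Psi'_odd[OF i] unfolding F.k'_def by simp
    have "i - 1 \<le> n" using i by auto
    hence P0: "Psi' n u s (2*i-2) = cmp u (i-1) (s (2*i-2))" using Psi'_even[of "i-1" n u s]
      by (simp add: right_diff_distrib')
    have P2: "Psi' n u s (2*i) = cmp u i (s (2*i))" using Psi'_even[of i n u s] i by simp
    show ?thesis unfolding P P0 P2 using F.k'_ptn F.k'_u F.k'_ilc_a F.k'_ilc_b by simp
  qed
  have A: "\<forall>k. (k = 0 \<or> 2*n < k) \<longrightarrow> Psi' n u s k = emp" unfolding Psi'_def by auto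
  have B: "ptn ((k+1) div 2) (Psi' n u s k) \<and> Psi' n u s k 1 \<le> u" if k: "k \<in> {1..2*n}" for k
  proof (cases rule: k_cases[OF k])
    case (1 i) thus ?thesis using ev[of i] by simp
  next
    case (2 i)
    have "(2*i-1+1) div 2 = i" using 2 by auto
    thus ?thesis using od[OF 2(1)] 2 by simp
  qed
  show ?thesis unfolding UD_def using A B od by blast
qed

lemma Psi'_Psi:
  assumes q: "q \<in> UD n u"
  shows "Psi' n u (Psi n u q) = q"
proof
  fix k
  show "Psi' n u (Psi n u q) k = q k"
  proof (cases "k \<in> {1..2*n}")
    case False
    hence "k = 0 \<or> 2*n < k" by auto
    thus ?thesis using q unfolding Psi'_def UD_def by auto
  next
    case True
    show ?thesis
    proof (cases rule: k_cases[OF True])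
      case (1 i)
      have "Psi' n u (Psi n u q) k = cmp u i (cmp u i (q (2*i)))"
        using Psi'_even[of i n u] Psi_even[of i n u q] 1 by simp
      thus ?thesis using cmp_cmp UD_even[OF q, of i] 1 by simp
    next
      case (2 i)
      interpret F: flipctx u i "q (2*i-2)" "q (2*i)" "q (2*i-1)" by (rule UD_fc[OF q 2(1)])
      have "i - 1 \<le> n" using 2 by auto
      have a: "ptn (i-1) (q (2*i-2))" "q (2*i-2) 1 \<le> u"
        using UD_even[OF q \<open>i-1 \<le> n\<close>] by (simp_all add: right_diff_distrib')
      have b: "ptn i (q (2*i))" "q (2*i) 1 \<le> u" using UD_even[OF q, of i] 2 by auto
      have P0: "Psi n u q (2*i-2) = cmp u (i-1) (q (2*i-2))" using Psi_even[of "i-1" n u q] \<open>i-1 \<le> n\<close>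
        by (simp add: right_diff_distrib')
      have P2: "Psi n u q (2*i) = cmp u i (q (2*i))" using Psi_even[of i n u q] 2 by simp
      have P1: "Psi n u q (2*i-1) = cmp u i F.k'" using Psi_odd[OF 2(1)] unfolding F.k'_def by simp
      have "Psi' n u (Psi n u q) k = flp u i (cmp u (i-1) (Psi n u q (2*i-2))) (cmp u i (Psi n u q (2*i)))
           (cmp u i (Psi n u q (2*i-1)))" using Psi'_odd[OF 2(1)] 2 by simp
      also have "\<dots> = flp u i (q (2*i-2)) (q (2*i)) F.k'"
        unfolding P0 P1 P2 using cmp_cmp[OF a] cmp_cmp[OF b] cmp_cmp[OF F.k'_ptn F.k'_u] by simp
      also have "\<dots> = q (2*i-1)" by (rule F.flp_flp)
      finally show ?thesis using 2 by simp
    qed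
  qed
qed

lemma Psi_Psi':
  assumes q: "s \<in> UU n u"
  shows "Psi n u (Psi' n u s) = s"
proof
  fix k
  show "Psi n u (Psi' n u s) k = s k"
  proof (cases "k \<in> {1..2*n}")
    case False
    hence "k = 0 \<or> 2*n < k" by auto
    thus ?thesis using q unfolding Psi_def UU_def by auto
  next
    case True
    show ?thesis
    proof (cases rule: k_cases[OF True])
      case (1 i)
      have "Psi n u (Psi' n u s) k = cmp u i (cmp u i (s (2*i)))"
        using Psi'_even[of i n u] Psi_even[of i n u] 1 by simp
      thus ?thesis using cmp_cmp UU_even[OF q, of i] 1 by simp
    next
      case (2 i)
      interpret F: flipctx u i "cmp u (i-1) (s (2*i-2))" "cmp u i (s (2*i))" "cmp u i (s (2*i-1))"
        by (rule UU_fc[OF q 2(1)])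
      have "i - 1 \<le> n" using 2 by auto
      have k: "ptn i (s (2*i-1))" "s (2*i-1) 1 \<le> u" using UU_odd[OF q 2(1)] by auto
      have P0: "Psi' n u s (2*i-2) = cmp u (i-1) (s (2*i-2))" using Psi'_even[of "i-1" n u s] \<open>i-1 \<le> n\<close>
        by (simp add: right_diff_distrib')
      have P2: "Psi' n u s (2*i) = cmp u i (s (2*i))" using Psi'_even[of i n u s] 2 by simp
      have P1: "Psi' n u s (2*i-1) = F.k'" using Psi'_odd[OF 2(1)] unfolding F.k'_def by simp
      have "Psi n u (Psi' n u s) k = cmp u i (flp u i (Psi' n u s (2*i-2)) (Psi' n u s (2*i)) (Psi' n u s (2*i-1)))"
        using Psi_odd[OF 2(1)] 2 by simp
      also have "\<dots> = cmp u i (cmp u i (s (2*i-1)))" unfolding P0 P1 P2 F.flp_flp ..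
      also have "\<dots> = s (2*i-1)" using cmp_cmp[OF k] .
      finally show ?thesis using 2 by simp
    qed
  qed
qed

lemma EQ_Psi:
  assumes q: "q \<in> UD n u" and i: "i \<in> {1..n}"
  shows "EQ n q i = int u + EQ n (Psi n u q) i"
proof -
  interpret F: flipctx u i "q (2*i-2)" "q (2*i)" "q (2*i-1)" by (rule UD_fc[OF q i])
  have "i - 1 \<le> n" "i \<le> n" using i by auto
  have a: "ptn (i-1) (q (2*i-2))" "q (2*i-2) 1 \<le> u"
    using UD_even[OF q \<open>i-1 \<le> n\<close>] by (simp_all add: right_diff_distrib')
  have b: "ptn i (q (2*i))" "q (2*i) 1 \<le> u" using UD_even[OF q, of i] i by auto
  have P0: "Psi n u q (2*i-2) = cmp u (i-1) (q (2*i-2))" using Psi_even[of "i-1" n u q] \<open>i-1 \<le> n\<close>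
    by (simp add: right_diff_distrib')
  have P2: "Psi n u q (2*i) = cmp u i (q (2*i))" using Psi_even[of i n u q] i by simp
  have P1: "Psi n u q (2*i-1) = cmp u i F.k'" using Psi_odd[OF i] unfolding F.k'_def by simp
  have s0: "int (psz n (Psi n u q (2*i-2))) = int (i-1) * int u - int (psz n (q (2*i-2)))"
    unfolding P0 by (rule cmp_size[OF a]) (use \<open>i-1 \<le> n\<close> in simp)
  have s2: "int (psz n (Psi n u q (2*i))) = int i * int u - int (psz n (q (2*i)))"
    unfolding P2 by (rule cmp_size[OF b \<open>i \<le> n\<close>])
  have s1: "int (psz n (Psi n u q (2*i-1))) = int i * int u - int (psz n F.k')"
    unfolding P1 by (rule cmp_size[OF F.k'_ptn F.k'_u \<open>i \<le> n\<close>])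
  have sk: "int (psz n F.k') = int u + int (psz n (q (2*i-2))) + int (psz n (q (2*i))) - int (psz n (q (2*i-1)))"
    by (rule F.k'_size[OF \<open>i \<le> n\<close>])
  have "int (i-1) = int i - 1" using i by auto
  thus ?thesis unfolding EQ_def s0 s1 s2 sk by (simp add: algebra_simps)
qed



definition shp :: "(nat \<times> nat \<Rightarrow> nat) \<Rightarrow> nat \<Rightarrow> nat \<Rightarrow> nat" where
  "shp T k r = card {c. 1 \<le> T (r,c) \<and> T (r,c) \<le> k}"

lemma downclosed_card:
  fixes S :: "nat set"
  assumes "S \<subseteq> {1..L}" "\<And>c c'. c \<in> S \<Longrightarrow> 1 \<le> c' \<Longrightarrow> c' \<le> c \<Longrightarrow> c' \<in> S"
  shows "S = {1..card S}"
proof (cases "S = {}")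
  case True thus ?thesis by simp
next
  case False
  have fin: "finite S" using assms(1) finite_subset by blast
  let ?m = "Max S"
  have mS: "?m \<in> S" using Max_in[OF fin False] .
  have "S = {1..?m}"
  proof
    show "S \<subseteq> {1..?m}" using assms(1) Max_ge[OF fin] by auto
    show "{1..?m} \<subseteq> S" using assms(2)[OF mS] by auto
  qed
  moreover have "card {1..?m} = ?m" by simp
  ultimately show ?thesis by simp
qed

locale tabctx =
  fixes n :: nat and lam :: "nat \<Rightarrow> nat" and T :: "nat \<times> nat \<Rightarrow> nat"
  assumes lamP: "lam \<in> partitions_le n" and TK: "T \<in> king_tableaux n lam"
begin

lemma T0: "p \<notin> cells lam \<Longrightarrow> T p = 0" using TK unfolding king_tableaux_def by (cases p) auto
lemma Trange: "p \<in> cells lam \<Longrightarrow> 1 \<le> T p \<and> T p \<le> 2*n" using TK unfolding king_tableaux_def by auto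
lemma Trow: "(r,c) \<in> cells lam \<Longrightarrow> (r, Suc c) \<in> cells lam \<Longrightarrow> T (r,c) \<le> T (r, Suc c)"
  using TK unfolding king_tableaux_def by auto
lemma Tcol: "(r,c) \<in> cells lam \<Longrightarrow> (Suc r, c) \<in> cells lam \<Longrightarrow> T (r,c) < T (Suc r, c)"
  using TK unfolding king_tableaux_def by auto
lemma Tflag: "(r,c) \<in> cells lam \<Longrightarrow> 2*r - 1 \<le> T (r,c)"
  using TK unfolding king_tableaux_def by auto

lemma lam_dec: "1 \<le> r \<Longrightarrow> lam (Suc r) \<le> lam r"
  using lamP unfolding partitions_le_def by auto

lemma cells_iff: "(r,c) \<in> cells lam \<longleftrightarrow> 1 \<le> r \<and> 1 \<le> c \<and> c \<le> lam r"
  unfolding cells_def by auto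

lemma Trow_mono: "(r,c) \<in> cells lam \<Longrightarrow> 1 \<le> c' \<Longrightarrow> c' \<le> c \<Longrightarrow> T (r,c') \<le> T (r,c)"
proof (induction c)
  case 0 thus ?case by simp
next
  case (Suc c)
  show ?case
  proof (cases "c' = Suc c")
    case True thus ?thesis by simp
  next
    case False
    hence c: "c' \<le> c" "1 \<le> c" using Suc by auto
    have "(r,c) \<in> cells lam" using Suc(2) c unfolding cells_def by auto
    thus ?thesis using Suc.IH[OF _ Suc(3) c(1)] Trow[of r c] Suc(2) by simp
  qed
qed

lemma shp_set: "{c. 1 \<le> T (r,c) \<and> T (r,c) \<le> k} = {c. (r,c) \<in> cells lam \<and> T (r,c) \<le> k}"
  using T0 Trange by force

lemma shp_iff: "1 \<le> c \<Longrightarrow> c \<le> shp T k r \<longleftrightarrow> (r,c) \<in> cells lam \<and> T (r,c) \<le> k"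
proof -
  assume c: "1 \<le> c"
  let ?S = "{c. (r,c) \<in> cells lam \<and> T (r,c) \<le> k}"
  have "?S = {1..card ?S}"
  proof (rule downclosed_card[where L = "lam r"])
    show "?S \<subseteq> {1..lam r}" unfolding cells_def by auto
  next
    fix x y assume "x \<in> ?S" "1 \<le> y" "y \<le> x"
    thus "y \<in> ?S" using Trow_mono[of r x y] unfolding cells_def by auto
  qed
  hence "c \<in> ?S \<longleftrightarrow> c \<in> {1..card ?S}" by simp
  thus ?thesis unfolding shp_def shp_set using c by simp
qed

lemma shp_0: "shp T k 0 = 0"
proof -
  have "T (0,c) = 0" for c using T0[of "(0,c)"] by (auto simp: cells_def)
  hence "{c. 1 \<le> T (0,c) \<and> T (0,c) \<le> k} = {}" by auto
  thus ?thesis unfolding shp_def by (metis card.empty)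
qed

lemma shp_le_lam: "shp T k r \<le> lam r"
proof (cases "shp T k r = 0")
  case False
  hence "shp T k r \<le> shp T k r" "1 \<le> shp T k r" by auto
  thus ?thesis using shp_iff[of "shp T k r" k r] unfolding cells_def by auto
qed simp

lemma shp_full: "shp T (2*n) r = lam r"
proof (rule antisym[OF shp_le_lam])
  show "lam r \<le> shp T (2*n) r"
  proof (cases "lam r = 0")
    case False
    hence "(r, lam r) \<in> cells lam"
    proof -
      have "lam 0 = 0" using lamP unfolding partitions_le_def by auto
      hence "r \<noteq> 0" using False by (cases r) auto
      thus ?thesis using False unfolding cells_def by auto
    qed
    thus ?thesis using shp_iff[of "lam r" "2*n" r] Trange False by auto
  qed simp
qed

lemma shp_zero_rows: "(k+1) div 2 < r \<Longrightarrow> shp T k r = 0"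
proof (rule ccontr)
  assume r: "(k+1) div 2 < r" and ne: "shp T k r \<noteq> 0"
  hence "(r, shp T k r) \<in> cells lam \<and> T (r, shp T k r) \<le> k" using shp_iff[of "shp T k r" k r] by auto
  hence "2*r - 1 \<le> k" using Tflag by fastforce
  thus False using r by arith
qed

lemma shp_mono: "k \<le> k' \<Longrightarrow> shp T k r \<le> shp T k' r"
proof (cases "shp T k r = 0")
  case False
  assume kk: "k \<le> k'"
  have "(r, shp T k r) \<in> cells lam \<and> T (r, shp T k r) \<le> k" using shp_iff[of "shp T k r" k r] False by auto
  thus ?thesis using shp_iff[of "shp T k r" k' r] kk False by auto
qed simp

lemma shp_ilc: "1 \<le> k \<Longrightarrow> ilc (shp T (k-1)) (shp T k)"
  unfolding ilc_def
proof (intro allI impI conjI)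
  fix r :: nat assume k: "1 \<le> k" and r: "1 \<le> r"
  show "shp T (k-1) r \<le> shp T k r" by (rule shp_mono) simp
  show "shp T k (Suc r) \<le> shp T (k-1) r"
  proof (cases "shp T k (Suc r) = 0")
    case False
    let ?c = "shp T k (Suc r)"
    have h: "(Suc r, ?c) \<in> cells lam" "T (Suc r, ?c) \<le> k" using shp_iff[of ?c k "Suc r"] False by auto
    have rc: "(r, ?c) \<in> cells lam" using h(1) r lam_dec[OF r] unfolding cells_def by auto
    have "T (r, ?c) \<le> k - 1" using Tcol[OF rc h(1)] h(2) by simp
    thus ?thesis using shp_iff[of ?c "k-1" r] rc False by auto
  qed simp
qed

lemma shp_ptn: "ptn ((k+1) div 2) (shp T k)"
  unfolding ptn_def
proof (intro conjI allI impI)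
  show "shp T k 0 = 0" by (rule shp_0)
  fix r :: nat
  show "(k+1) div 2 < r \<Longrightarrow> shp T k r = 0" by (rule shp_zero_rows)
  assume r: "1 \<le> r"
  show "shp T k (Suc r) \<le> shp T k r"
  proof (cases "shp T k (Suc r) = 0")
    case False
    let ?c = "shp T k (Suc r)"
    have h: "(Suc r, ?c) \<in> cells lam" "T (Suc r, ?c) \<le> k" using shp_iff[of ?c k "Suc r"] False by auto
    have rc: "(r, ?c) \<in> cells lam" using h(1) r lam_dec[OF r] unfolding cells_def by auto
    have "T (r, ?c) \<le> k" using Tcol[OF rc h(1)] h(2) by simp
    thus ?thesis using shp_iff[of ?c k r] rc False by auto
  qed simp
qed

lemma shp_zero: "shp T 0 = emp"
proof
  fix r
  show "shp T 0 r = emp r"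
  proof (cases "shp T 0 r = 0")
    case False
    thus ?thesis using shp_iff[of "shp T 0 r" 0 r] Trange by fastforce
  qed simp
qed

lemma count_shp:
  assumes "1 \<le> a"
  shows "int (count_letter lam T a) = int (psz n (shp T a)) - int (psz n (shp T (a-1)))"
proof -
  have lamn: "lam r = 0" if "n < r" for r using lamP that unfolding partitions_le_def by auto
  have eq: "{p \<in> cells lam. T p = a} = Sigma {1..n} (\<lambda>r. {shp T (a-1) r<..shp T a r})"
  proof (rule set_eqI)
    fix p :: "nat \<times> nat"
    obtain r c where p: "p = (r,c)" by (cases p)
    show "p \<in> {p \<in> cells lam. T p = a} \<longleftrightarrow> p \<in> Sigma {1..n} (\<lambda>r. {shp T (a-1) r<..shp T a r})"
    proof (cases "1 \<le> c")
      case False thus ?thesis using p unfolding cells_def by auto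
    next
      case True
      have i1: "c \<le> shp T a r \<longleftrightarrow> (r,c) \<in> cells lam \<and> T (r,c) \<le> a" using shp_iff[OF True] .
      have i2: "c \<le> shp T (a-1) r \<longleftrightarrow> (r,c) \<in> cells lam \<and> T (r,c) \<le> a-1" using shp_iff[OF True] .
      have rn: "r \<in> {1..n}" if rc: "(r,c) \<in> cells lam"
      proof -
        have "1 \<le> r" "1 \<le> c" "c \<le> lam r" using rc unfolding cells_def by auto
        moreover have "\<not> n < r" using lamn calculation by fastforce
        ultimately show ?thesis by simp
      qed
      show ?thesis unfolding p using i1 i2 rn assms by auto
    qed
  qed
  have "count_letter lam T a = card (Sigma {1..n} (\<lambda>r. {shp T (a-1) r<..shp T a r}))"
    unfolding count_letter_def eq ..
  also have "\<dots> = (\<Sum>r\<in>{1..n}. shp T a r - shp T (a-1) r)" by (simp add: card_SigmaI)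
  finally have "int (count_letter lam T a) = (\<Sum>r\<in>{1..n}. int (shp T a r) - int (shp T (a-1) r))"
    using shp_mono[of "a-1" a] by (simp add: of_nat_diff)
  thus ?thesis unfolding psz_def by (simp add: sum_subtractf)
qed

end

definition chainT :: "nat \<Rightarrow> (nat \<times> nat \<Rightarrow> nat) \<Rightarrow> nat \<Rightarrow> nat \<Rightarrow> nat" where
  "chainT n T = (\<lambda>k. if 2*n < k then emp else shp T k)"

definition Tof :: "(nat \<Rightarrow> nat) \<Rightarrow> (nat \<Rightarrow> nat \<Rightarrow> nat) \<Rightarrow> nat \<times> nat \<Rightarrow> nat" where
  "Tof lam s = (\<lambda>(r,c). if (r,c) \<in> cells lam then (LEAST k. c \<le> s k r) else 0)"

lemma (in tabctx) chainT_UU: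
  assumes "lam 1 \<le> u"
  shows "chainT n T \<in> UU n u"
  unfolding UU_def
proof (intro CollectI conjI allI impI ballI)
  fix k :: nat assume "k = 0 \<or> 2*n < k"
  thus "chainT n T k = emp" unfolding chainT_def using shp_zero by auto
next
  fix k assume k: "k \<in> {1..2*n}"
  show "ptn ((k+1) div 2) (chainT n T k)" using k shp_ptn unfolding chainT_def by auto
  show "chainT n T k 1 \<le> u" using k shp_le_lam[of k 1] assms unfolding chainT_def by auto
  show "ilc (chainT n T (k-1)) (chainT n T k)" using k shp_ilc[of k] unfolding chainT_def by auto
qed

lemma (in tabctx) chainT_full: "chainT n T (2*n) = lam"
  unfolding chainT_def using shp_full by auto

lemma (in tabctx) weight_chainT:
  assumes "i \<in> {1..n}"
  shows "int (count_letter lam T (2*i-1)) - int (count_letter lam T (2*i))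
     = 2 * int (psz n (chainT n T (2*i-1))) - int (psz n (chainT n T (2*i-2))) - int (psz n (chainT n T (2*i)))"
proof -
  have "2*i-1-1 = 2*i-2" "2*i-1 = 2*i-1" by auto
  thus ?thesis using count_shp[of "2*i-1"] count_shp[of "2*i"] assms unfolding chainT_def by auto
qed

locale chainctx =
  fixes n u :: nat and s :: "nat \<Rightarrow> nat \<Rightarrow> nat"
  assumes sU: "s \<in> UU n u"
begin

definition lam where "lam = s (2*n)"

lemma s_emp: "k = 0 \<or> 2*n < k \<Longrightarrow> s k = emp" using sU unfolding UU_def by auto
lemma s_ptn: "k \<in> {1..2*n} \<Longrightarrow> ptn ((k+1) div 2) (s k)" using sU unfolding UU_def by auto
lemma s_bnd: "k \<in> {1..2*n} \<Longrightarrow> s k 1 \<le> u" using sU unfolding UU_def by auto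
lemma s_ilc: "k \<in> {1..2*n} \<Longrightarrow> ilc (s (k-1)) (s k)" using sU unfolding UU_def by auto

lemma s_zero0: "s k 0 = 0"
  using s_emp[of k] s_ptn[of k] unfolding ptn_def by (cases "k \<in> {1..2*n}") auto

lemma s_step: "k \<in> {1..2*n} \<Longrightarrow> s (k-1) r \<le> s k r"
  using s_ilc[of k] s_zero0[of "k-1"] unfolding ilc_def by (cases "r = 0") auto

lemma s_mono: "k \<le> k' \<Longrightarrow> k' \<le> 2*n \<Longrightarrow> s k r \<le> s k' r"
proof (induction k' rule: dec_induct)
  case base thus ?case by simp
next
  case (step m)
  have "s m r \<le> s (Suc m) r" using s_step[of "Suc m" r] step by simp
  thus ?case using step by simp
qed

lemma Tof_char:
  assumes rc: "(r,c) \<in> cells lam"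
  shows "c \<le> s (Tof lam s (r,c)) r \<and> Tof lam s (r,c) \<le> 2*n \<and> (\<forall>k. c \<le> s k r \<longrightarrow> Tof lam s (r,c) \<le> k)"
proof -
  have P: "c \<le> s (2*n) r" using rc unfolding cells_def lam_def by auto
  have t: "Tof lam s (r,c) = (LEAST k. c \<le> s k r)" using rc unfolding Tof_def by simp
  show ?thesis unfolding t using LeastI[of "\<lambda>k. c \<le> s k r", OF P] Least_le[of "\<lambda>k. c \<le> s k r", OF P]
    Least_le[of "\<lambda>k. c \<le> s k r"] by auto
qed

lemma Tof_iff:
  assumes rc: "(r,c) \<in> cells lam" and k: "k \<le> 2*n"
  shows "Tof lam s (r,c) \<le> k \<longleftrightarrow> c \<le> s k r"
  using Tof_char[OF rc] s_mono[of "Tof lam s (r,c)" k r] k le_trans by blast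

lemma Tof_ge1:
  assumes rc: "(r,c) \<in> cells lam"
  shows "1 \<le> Tof lam s (r,c)"
proof (rule ccontr)
  assume "\<not> 1 \<le> Tof lam s (r,c)"
  hence "Tof lam s (r,c) \<le> 0" by simp
  hence "c \<le> s 0 r" using Tof_iff[OF rc, of 0] by simp
  moreover have "1 \<le> c" using rc unfolding cells_def by auto
  ultimately show False using s_emp[of 0] by simp
qed

lemma lam_P: "lam \<in> partitions_le n" and lam_u: "lam 1 \<le> u" if "1 \<le> n"
proof -
  have k: "2*n \<in> {1..2*n}" using that by auto
  have "ptn n lam" using s_ptn[OF k] unfolding lam_def by simp
  thus "lam \<in> partitions_le n" unfolding ptn_def partitions_le_def by auto
  show "lam 1 \<le> u" using s_bnd[OF k] unfolding lam_def by simp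
qed

lemma Tof_king: "Tof lam s \<in> king_tableaux n lam"
  unfolding king_tableaux_def
proof (intro CollectI conjI allI impI ballI)
  fix p :: "nat \<times> nat" assume "p \<notin> cells lam"
  thus "Tof lam s p = 0" unfolding Tof_def by (cases p) auto
next
  fix p :: "nat \<times> nat" assume p: "p \<in> cells lam"
  obtain r c where rc: "p = (r,c)" by (cases p)
  show "1 \<le> Tof lam s p" using Tof_ge1 p rc by simp
  show "Tof lam s p \<le> 2*n" using Tof_char p rc by simp
next
  fix r c assume h: "(r, c) \<in> cells lam \<and> (r, Suc c) \<in> cells lam"
  let ?k = "Tof lam s (r, Suc c)"
  have "Suc c \<le> s ?k r" "?k \<le> 2*n" using Tof_char[of r "Suc c"] h by auto
  thus "Tof lam s (r,c) \<le> ?k" using Tof_iff[of r c ?k] h by simp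
next
  fix r c assume h: "(r, c) \<in> cells lam \<and> (Suc r, c) \<in> cells lam"
  let ?k = "Tof lam s (Suc r, c)"
  have k: "c \<le> s ?k (Suc r)" "?k \<le> 2*n" "1 \<le> ?k" using Tof_char[of "Suc r" c] Tof_ge1[of "Suc r" c] h by auto
  have r1: "1 \<le> r" using h unfolding cells_def by auto
  have "s ?k (Suc r) \<le> s (?k - 1) r" using s_ilc[of ?k] k r1 unfolding ilc_def by auto
  hence "Tof lam s (r,c) \<le> ?k - 1" using Tof_iff[of r c "?k - 1"] h k by simp
  thus "Tof lam s (r,c) < ?k" using k by simp
next
  fix r c assume h: "(r, c) \<in> cells lam"
  let ?k = "Tof lam s (r, c)"
  have k: "c \<le> s ?k r" "?k \<le> 2*n" "1 \<le> ?k" using Tof_char[OF h] Tof_ge1[OF h] by auto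
  have c1: "1 \<le> c" using h unfolding cells_def by auto
  have "s ?k r \<noteq> 0" using k c1 by simp
  moreover have "ptn ((?k+1) div 2) (s ?k)" using s_ptn[of ?k] k by simp
  ultimately have "r \<le> (?k+1) div 2" unfolding ptn_def by (meson not_le)
  thus "2*r - 1 \<le> ?k" by arith
qed

end



lemma nat_eq_by_le: "(\<And>c. 1 \<le> c \<Longrightarrow> c \<le> a \<longleftrightarrow> c \<le> (b::nat)) \<Longrightarrow> a = b"
proof -
  assume h: "\<And>c. 1 \<le> c \<Longrightarrow> c \<le> a \<longleftrightarrow> c \<le> (b::nat)"
  show "a = b"
  proof (rule ccontr)
    assume ne: "a \<noteq> b"
    show False
    proof (cases "a < b")
      case True thus False using h[of b] by simp
    next
      case False
      hence "b < a" using ne by simp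
      thus False using h[of a] by simp
    qed
  qed
qed

lemma (in chainctx) chainT_Tof:
  assumes n1: "1 \<le> n"
  shows "chainT n (Tof lam s) = s"
proof
  interpret TC: tabctx n lam "Tof lam s" using lam_P[OF n1] Tof_king by unfold_locales
  fix k
  show "chainT n (Tof lam s) k = s k"
  proof (cases "2*n < k")
    case True thus ?thesis using s_emp unfolding chainT_def by simp
  next
    case False
    hence k: "k \<le> 2*n" by simp
    have "shp (Tof lam s) k = s k"
    proof
      fix r
      show "shp (Tof lam s) k r = s k r"
      proof (cases "r = 0")
        case True thus ?thesis using TC.shp_0 s_zero0 by simp
      next
        case False
        show ?thesis
        proof (rule nat_eq_by_le)
          fix c :: nat assume c: "1 \<le> c"
          have "c \<le> shp (Tof lam s) k r \<longleftrightarrow> (r,c) \<in> cells lam \<and> Tof lam s (r,c) \<le> k"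
            using TC.shp_iff[OF c] .
          also have "\<dots> \<longleftrightarrow> (r,c) \<in> cells lam \<and> c \<le> s k r" using Tof_iff k by blast
          also have "\<dots> \<longleftrightarrow> c \<le> s k r"
          proof
            assume "c \<le> s k r"
            hence "c \<le> lam r" using s_mono[of k "2*n" r] k unfolding lam_def by simp
            thus "(r,c) \<in> cells lam \<and> c \<le> s k r" using \<open>c \<le> s k r\<close> c False unfolding cells_def by auto
          qed simp
          finally show "c \<le> shp (Tof lam s) k r \<longleftrightarrow> c \<le> s k r" .
        qed
      qed
    qed
    thus ?thesis using k unfolding chainT_def by simp
  qed
qed

lemma (in tabctx) Tof_chainT: "Tof lam (chainT n T) = T"
proof
  fix p :: "nat \<times> nat"
  obtain r c where p: "p = (r,c)" by (cases p)
  show "Tof lam (chainT n T) p = T p"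
  proof (cases "p \<in> cells lam")
    case False thus ?thesis using T0 unfolding Tof_def p by simp
  next
    case True
    have c: "1 \<le> c" using True p unfolding cells_def by auto
    have tr: "1 \<le> T (r,c) \<and> T (r,c) \<le> 2*n" using Trange True p by simp
    have "(LEAST k. c \<le> chainT n T k r) = T (r,c)"
    proof (rule Least_equality)
      show "c \<le> chainT n T (T (r,c)) r" using shp_iff[OF c, of "T (r,c)" r] True p tr unfolding chainT_def by simp
    next
      fix k assume h: "c \<le> chainT n T k r"
      show "T (r,c) \<le> k"
      proof (cases "2*n < k")
        case True thus ?thesis using tr by simp
      next
        case False thus ?thesis using h shp_iff[OF c, of k r] unfolding chainT_def by simp
      qed
    qed
    thus ?thesis using True unfolding Tof_def p by simp
  qed
qed

lemma bij_lam:
  assumes lP: "lam \<in> partitions_le n" and lu: "lam 1 \<le> u" and n1: "1 \<le> n"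
  shows "bij_betw (chainT n) (king_tableaux n lam) {s \<in> UU n u. s (2*n) = lam}"
proof (rule bij_betw_byWitness[where f' = "Tof lam"])
  show "\<forall>T\<in>king_tableaux n lam. Tof lam (chainT n T) = T"
    using tabctx.Tof_chainT[of n lam] lP unfolding tabctx_def by blast
  show "\<forall>s\<in>{s \<in> UU n u. s (2*n) = lam}. chainT n (Tof lam s) = s"
  proof
    fix s assume s: "s \<in> {s \<in> UU n u. s (2*n) = lam}"
    interpret C: chainctx n u s using s by unfold_locales simp
    show "chainT n (Tof lam s) = s" using C.chainT_Tof[OF n1] s unfolding C.lam_def by simp
  qed
  show "chainT n ` king_tableaux n lam \<subseteq> {s \<in> UU n u. s (2*n) = lam}"
  proof
    fix s assume "s \<in> chainT n ` king_tableaux n lam"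
    then obtain T where T: "T \<in> king_tableaux n lam" "s = chainT n T" by blast
    interpret TC: tabctx n lam T using lP T by unfold_locales
    show "s \<in> {s \<in> UU n u. s (2*n) = lam}" using TC.chainT_UU[OF lu] TC.chainT_full T by simp
  qed
  show "Tof lam ` {s \<in> UU n u. s (2*n) = lam} \<subseteq> king_tableaux n lam"
  proof
    fix T assume "T \<in> Tof lam ` {s \<in> UU n u. s (2*n) = lam}"
    then obtain s where s: "s \<in> UU n u" "s (2*n) = lam" "T = Tof lam s" by blast
    interpret C: chainctx n u s using s by unfold_locales
    show "T \<in> king_tableaux n lam" using C.Tof_king s unfolding C.lam_def by simp
  qed
qed


definition Bset :: "nat \<Rightarrow> nat \<Rightarrow> (nat \<Rightarrow> nat) set" where
  "Bset n u = {f. \<forall>r. (r = 0 \<or> n < r \<longrightarrow> f r = 0) \<and> f r \<le> u}"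

lemma finite_Bset: "finite (Bset n u)"
proof -
  let ?L = "{xs. set xs \<subseteq> {0..u} \<and> length xs = n}"
  let ?g = "\<lambda>xs r. if 1 \<le> r \<and> r \<le> n then xs ! (r-1) else (0::nat)"
  have "Bset n u \<subseteq> ?g ` ?L"
  proof
    fix f assume f: "f \<in> Bset n u"
    let ?xs = "map f [1..<n+1]"
    have "?xs \<in> ?L" using f unfolding Bset_def by (auto simp del: upt_Suc)
    moreover have "f = ?g ?xs"
    proof
      fix r show "f r = ?g ?xs r"
      proof (cases "1 \<le> r \<and> r \<le> n")
        case True
        have l: "r - 1 < length [1..<n+1]" using True by auto
        have "[1..<n+1] ! (r-1) = r" using True by (simp add: nth_upt del: upt_Suc)
        hence "map f [1..<n+1] ! (r-1) = f r" using nth_map[OF l, of f] by simp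
        thus ?thesis using True by (simp del: upt_Suc)
      next
        case False
        hence "r = 0 \<or> n < r" by auto
        thus ?thesis using f False unfolding Bset_def by auto
      qed
    qed
    ultimately show "f \<in> ?g ` ?L" by blast
  qed
  moreover have "finite ?L" using finite_lists_length_eq[of "{0..u}" n] by simp
  ultimately show ?thesis by (meson finite_subset finite_imageI)
qed

lemma ptn_Bset: "ptn k p \<Longrightarrow> k \<le> n \<Longrightarrow> p 1 \<le> u \<Longrightarrow> p \<in> Bset n u"
  unfolding Bset_def using ptn_bnd[of k p u] unfolding ptn_def by auto

lemma finite_P: "finite {lam \<in> partitions_le n. lam 1 \<le> u}"
proof (rule finite_subset[OF _ finite_Bset[of n u]])
  show "{lam \<in> partitions_le n. lam 1 \<le> u} \<subseteq> Bset n u"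
  proof
    fix lam assume "lam \<in> {lam \<in> partitions_le n. lam 1 \<le> u}"
    hence "ptn n lam" "lam 1 \<le> u" unfolding partitions_le_def ptn_def by auto
    thus "lam \<in> Bset n u" using ptn_Bset[of n lam n u] by simp
  qed
qed

lemma finite_UU: "finite (UU n u)"
proof -
  let ?L = "{xs. set xs \<subseteq> Bset n u \<and> length xs = 2*n+1}"
  let ?g = "\<lambda>xs k. if k \<le> 2*n then xs ! k else emp"
  have "UU n u \<subseteq> ?g ` ?L"
  proof
    fix s assume s: "s \<in> UU n u"
    let ?xs = "map s [0..<2*n+1]"
    have "s k \<in> Bset n u" if "k \<le> 2*n" for k
    proof (cases "k = 0")
      case True thus ?thesis using s unfolding UU_def Bset_def by auto
    next
      case False
      hence "k \<in> {1..2*n}" using that by auto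
      hence "ptn ((k+1) div 2) (s k)" "s k 1 \<le> u" using s unfolding UU_def by auto
      moreover have "(k+1) div 2 \<le> n" using that by auto
      ultimately show ?thesis using ptn_Bset[of "(k+1) div 2" "s k" n u] by simp
    qed
    hence "?xs \<in> ?L" by (auto simp del: upt_Suc)
    moreover have "s = ?g ?xs"
    proof
      fix k show "s k = ?g ?xs k"
        using s unfolding UU_def by (cases "k \<le> 2*n") (auto simp del: upt_Suc)
    qed
    ultimately show "s \<in> ?g ` ?L" by blast
  qed
  moreover have "finite ?L" using finite_lists_length_eq[OF finite_Bset] by simp
  ultimately show ?thesis by (meson finite_subset finite_imageI)
qed

lemma sp_char_UU:
  assumes lP: "lam \<in> partitions_le n" and lu: "lam 1 \<le> u" and n1: "1 \<le> n"
  shows "sp_char n x lam = (\<Sum>s\<in>{s \<in> UU n u. s (2*n) = lam}. \<Prod>i\<in>{1..n}. (x i :: 'a::field) powi EQ n s i)"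
proof -
  have "sp_char n x lam = (\<Sum>T\<in>king_tableaux n lam. \<Prod>i\<in>{1..n}. x i powi EQ n (chainT n T) i)"
    unfolding sp_char_def
  proof (rule sum.cong[OF refl])
    fix T assume T: "T \<in> king_tableaux n lam"
    interpret TC: tabctx n lam T using lP T by unfold_locales
    show "(\<Prod>i\<in>{1..n}. x i powi (int (count_letter lam T (2*i-1)) - int (count_letter lam T (2*i))))
       = (\<Prod>i\<in>{1..n}. x i powi EQ n (chainT n T) i)"
    proof (rule prod.cong[OF refl])
      fix i assume i: "i \<in> {1..n}"
      show "x i powi (int (count_letter lam T (2*i-1)) - int (count_letter lam T (2*i))) = x i powi EQ n (chainT n T) i"
        using TC.weight_chainT[OF i] unfolding EQ_def by simp
    qed
  qed
  also have "\<dots> = (\<Sum>s\<in>{s \<in> UU n u. s (2*n) = lam}. \<Prod>i\<in>{1..n}. x i powi EQ n s i)"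
    using sum.reindex_bij_betw[OF bij_lam[OF lP lu n1], of "\<lambda>s. \<Prod>i\<in>{1..n}. x i powi EQ n s i"] by simp
  finally show ?thesis .
qed

lemma RHS_UU:
  assumes n1: "1 \<le> n"
  shows "(\<Sum>lam\<in>{lam \<in> partitions_le n. lam 1 \<le> u}. sp_char n x lam)
     = (\<Sum>s\<in>UU n u. \<Prod>i\<in>{1..n}. (x i :: 'a::field) powi EQ n s i)"
proof -
  let ?P = "{lam \<in> partitions_le n. lam 1 \<le> u}"
  let ?h = "\<lambda>s. \<Prod>i\<in>{1..n}. (x i :: 'a::field) powi EQ n s i"
  have "(\<Sum>lam\<in>?P. sp_char n x lam) = (\<Sum>lam\<in>?P. \<Sum>s\<in>{s \<in> UU n u. s (2*n) = lam}. ?h s)"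
    by (rule sum.cong[OF refl]) (use sp_char_UU n1 in auto)
  also have "\<dots> = sum ?h (UU n u)"
  proof (rule sum.group[OF finite_UU finite_P])
    show "(\<lambda>s. s (2*n)) ` UU n u \<subseteq> ?P"
    proof
      fix lam assume "lam \<in> (\<lambda>s. s (2*n)) ` UU n u"
      then obtain s where s: "s \<in> UU n u" "lam = s (2*n)" by blast
      interpret C: chainctx n u s using s by unfold_locales
      show "lam \<in> ?P" using C.lam_P[OF n1] C.lam_u[OF n1] s unfolding C.lam_def by simp
    qed
  qed
  finally show ?thesis .
qed

lemma UD_UU_sum:
  assumes n1: "1 \<le> n" and x0: "\<forall>i\<in>{1..n}. (x i :: 'a::field) \<noteq> 0"
  shows "(\<Sum>q\<in>UD n u. \<Prod>i\<in>{1..n}. x i powi EQ n q i)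
     = (\<Prod>i\<in>{1..n}. x i) ^ u * (\<Sum>s\<in>UU n u. \<Prod>i\<in>{1..n}. x i powi EQ n s i)"
proof -
  have bij: "bij_betw (Psi n u) (UD n u) (UU n u)"
    by (rule bij_betw_byWitness[where f' = "Psi' n u"]) (use Psi'_Psi Psi_Psi' Psi_UU Psi'_UD in auto)
  have "(\<Sum>q\<in>UD n u. \<Prod>i\<in>{1..n}. x i powi EQ n q i)
      = (\<Sum>q\<in>UD n u. \<Prod>i\<in>{1..n}. x i ^ u * x i powi EQ n (Psi n u q) i)"
  proof (rule sum.cong[OF refl])
    fix q assume q: "q \<in> UD n u"
    show "(\<Prod>i\<in>{1..n}. x i powi EQ n q i) = (\<Prod>i\<in>{1..n}. x i ^ u * x i powi EQ n (Psi n u q) i)"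
    proof (rule prod.cong[OF refl])
      fix i assume i: "i \<in> {1..n}"
      have "x i powi EQ n q i = x i powi (int u + EQ n (Psi n u q) i)" using EQ_Psi[OF q i] by simp
      also have "\<dots> = x i powi int u * x i powi EQ n (Psi n u q) i"
        by (rule power_int_add) (use x0 i in auto)
      finally show "x i powi EQ n q i = x i ^ u * x i powi EQ n (Psi n u q) i" by simp
    qed
  qed
  also have "\<dots> = (\<Sum>q\<in>UD n u. (\<Prod>i\<in>{1..n}. x i) ^ u * (\<Prod>i\<in>{1..n}. x i powi EQ n (Psi n u q) i))"
    by (simp add: prod.distrib power_mult_distrib prod_power_distrib)
  also have "\<dots> = (\<Prod>i\<in>{1..n}. x i) ^ u * (\<Sum>q\<in>UD n u. \<Prod>i\<in>{1..n}. x i powi EQ n (Psi n u q) i)"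
    by (simp add: sum_distrib_left)
  also have "(\<Sum>q\<in>UD n u. \<Prod>i\<in>{1..n}. x i powi EQ n (Psi n u q) i) = (\<Sum>s\<in>UU n u. \<Prod>i\<in>{1..n}. x i powi EQ n s i)"
    using sum.reindex_bij_betw[OF bij, of "\<lambda>s. \<Prod>i\<in>{1..n}. x i powi EQ n s i"] by simp
  finally show ?thesis .
qed

theorem mainTheorem3:
  fixes n u :: nat and x :: "nat \<Rightarrow> 'a::field"
  assumes "n \<ge> 1"
    and "\<forall>i\<in>{1..n}. x i \<noteq> 0"
  shows "(\<Sum>W\<in>{W \<in> fillings n. Lp2hlr n W \<le> u}. wt n x W)
       = (\<Prod>i\<in>{1..n}. x i) ^ u * (\<Sum>lam\<in>{lam \<in> partitions_le n. lam 1 \<le> u}. sp_char n x lam)"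
  using LHS_UD[OF assms(1), where u=u and x=x] UD_UU_sum[OF assms, where u=u] RHS_UU[OF assms(1), where u=u and x=x] by simp


end
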